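(* Let $C\subseteq\mathbb{R}^n$ be prox-regular at a point $\bar x\in C$. Then $C$ is smoothly approximately convex at $\bar x$. Moreover, for every $\epsilon>0$ there exists $\delta>0$ such that for all $x,x'\in C\cap B_\delta(\bar x)$, every averaging map $\gamma:[0,1]\to C$ in the metric space $(C,d_C)$ from $x$ to $x'$ is an $\epsilon$-path from $x$ to $x'$.
   Context: For $\bar x\in C$, the regular normal cone $\widehat N_C(\bar x)$ is the set of $v$ with $\langle v,x-\bar x\rangle\le o(\|x-\bar x\|)$ for $x\in C$; the normal cone $N_C(\bar x)$ is the set of limits $v=\lim v_k$ with $v_k\in\widehat N_C(x_k)$, $x_k\in C$, $x_k\to\bar x$. $C$ is locally closed at $\bar x$ if $C\cap\overline B$ is closed for some closed ball $\overline B$ centered at $\bar x$. $C$ is prox-regular at $\bar x$ if it is locally closed there and for every $\bar v\in N_C(\bar x)$ there are $\epsilon,\rho>0$ with $\langle v,x'-x\rangle\le\rho\|x'-x\|^2$ for all $x,x'\in C\cap B_\epsilon(\bar x)$ and $v\in N_C(x)\cap B_\epsilon(\bar v)$. The length of a curve and the intrinsic distance $d_C(x,y)$ (infimum of Euclidean lengths of curves in $C$ from $x$ to $y$) are the usual ones. An averaging map in $(C,d_C)$ from $x$ to $x'$ is a curve $\gamma:[0,1]\to C$ with $\gamma(0)=x,\gamma(1)=x'$ and $d_C(\gamma(t_1),\gamma(t_2))=|t_1-t_2|\,d_C(x,x')$ for all $t_1,t_2\in[0,1]$. A smooth curve segment $\gamma:[0,1]\to C$ is one extending to a $\mathcal{C}^{(1)}$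 map on an open neighborhood of $[0,1]$. An $\epsilon$-path from $x$ to $x'$ is a smooth curve segment $\gamma:[0,1]\to C$ with $\gamma(0)=x,\gamma(1)=x'$ and $\|\gamma'(t)-(x'-x)\|\le\epsilon\|x'-x\|$ for all $t\in[0,1]$. $C$ is smoothly approximately convex at $\bar x$ if for every $\epsilon>0$ there is a neighborhood $W$ of $\bar x$ such that any $x,x'\in C\cap W$ are joined by an $\epsilon$-path. *)

theory Defs
  imports "HOL-Analysis.Analysis"
begin

definition reg_normal_cone :: "'a::euclidean_space set \<Rightarrow> 'a \<Rightarrow> 'a set" where
  "reg_normal_cone C xb =
     (if xb \<in> C then
        {v. \<forall>e>0. \<exists>d>0. \<forall>x\<in>C. norm (x - xb) < d \<longrightarrow> inner v (x - xb) \<le> e * norm (x - xb)}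
      else {})"

definition normal_cone :: "'a::euclidean_space set \<Rightarrow> 'a \<Rightarrow> 'a set" where
  "normal_cone C xb =
     (if xb \<in> C then
        {v. \<exists>xs vs. (\<forall>k. xs k \<in> C \<and> vs k \<in> reg_normal_cone C (xs k)) \<and>
                    xs \<longlonglongrightarrow> xb \<and> vs \<longlonglongrightarrow> v}
      else {})"

definition locally_closed_at :: "'a::euclidean_space set \<Rightarrow> 'a \<Rightarrow> bool" where
  "locally_closed_at C xb = (\<exists>r>0. closed (C \<inter> cball xb r))"

definition prox_regular_at :: "'a::euclidean_space set \<Rightarrow> 'a \<Rightarrow> bool" where
  "prox_regular_at C xb =
     (locally_closed_at C xb \<and>
      (\<forall>vb\<in>normal_cone C xb. \<exists>e>0. \<exists>\<rho>>0.
         \<forall>x\<in>C \<inter> ball xb e. \<forall>x'\<in>C \<inter> ball xb e. \<forall>v\<in>normal_cone C x \<inter> ball vb e.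
           inner v (x' - x) \<le> \<rho> * (norm (x' - x))\<^sup>2))"

definition curve_length :: "(real \<Rightarrow> 'a::euclidean_space) \<Rightarrow> ennreal" where
  "curve_length g =
     (SUP (n, t) \<in> {(n::nat, t::nat \<Rightarrow> real). t 0 = 0 \<and> t n = 1 \<and> (\<forall>i<n. t i \<le> t (Suc i))}.
        ennreal (\<Sum>i<n. norm (g (t (Suc i)) - g (t i))))"

definition intrinsic_dist :: "'a::euclidean_space set \<Rightarrow> 'a \<Rightarrow> 'a \<Rightarrow> ennreal" where
  "intrinsic_dist C x y =
     (INF g \<in> {g. path g \<and> path_image g \<subseteq> C \<and> pathstart g = x \<and> pathfinish g = y}. curve_length g)"

definition averaging_map :: "'a::euclidean_space set \<Rightarrow> 'a \<Rightarrow> 'a \<Rightarrow> (real \<Rightarrow> 'a) \<Rightarrow> bool" where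
  "averaging_map C x x' \<gamma> =
     (continuous_on {0..1} \<gamma> \<and> \<gamma> ` {0..1} \<subseteq> C \<and> \<gamma> 0 = x \<and> \<gamma> 1 = x' \<and>
      (\<forall>t1\<in>{0..1}. \<forall>t2\<in>{0..1}.
         intrinsic_dist C (\<gamma> t1) (\<gamma> t2) = ennreal \<bar>t1 - t2\<bar> * intrinsic_dist C x x'))"

definition eps_path :: "real \<Rightarrow> 'a::euclidean_space set \<Rightarrow> 'a \<Rightarrow> 'a \<Rightarrow> (real \<Rightarrow> 'a) \<Rightarrow> bool" where
  "eps_path eps C x x' \<gamma> =
     (\<gamma> ` {0..1} \<subseteq> C \<and> \<gamma> 0 = x \<and> \<gamma> 1 = x' \<and>
      (\<exists>U g g'. open U \<and> {0..1} \<subseteq> U \<and> (\<forall>t\<in>{0..1}. g t = \<gamma> t) \<and>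
         (\<forall>t\<in>U. (g has_vector_derivative g' t) (at t)) \<and> continuous_on U g' \<and>
         (\<forall>t\<in>{0..1}. norm (g' t - (x' - x)) \<le> eps * norm (x' - x))))"

definition smoothly_approx_convex_at :: "'a::euclidean_space set \<Rightarrow> 'a \<Rightarrow> bool" where
  "smoothly_approx_convex_at C xb =
     (\<forall>eps>0. \<exists>W. open W \<and> xb \<in> W \<and>
        (\<forall>x\<in>C \<inter> W. \<forall>x'\<in>C \<inter> W. \<exists>\<gamma>. eps_path eps C x x' \<gamma>))"

end

theory Submission
  imports Defs
begin
lemma nsq_diff: "(norm (a - b))\<^sup>2 = (norm a)\<^sup>2 - 2 * inner a b + (norm (b::'a::real_inner))\<^sup>2"
  unfolding power2_norm_eq_inner by (simp add: inner_diff_left inner_diff_right inner_commute)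

lemma nsq_add: "(norm (a + b))\<^sup>2 = (norm a)\<^sup>2 + 2 * inner a b + (norm (b::'a::real_inner))\<^sup>2"
  unfolding power2_norm_eq_inner by (simp add: inner_add_left inner_add_right inner_commute)
 
lemma tri: "norm (x - z) \<le> norm (x - y) + norm (y - (z::'a::real_normed_vector))"
proof -
  have "x - z = (x - y) + (y - z)" by simp
  then show ?thesis by (metis norm_triangle_ineq)
qed

lemma tri2: "norm (x - z) \<le> norm (x - y) + norm (z - (y::'a::real_normed_vector))"
  using tri[of x z y] by (simp add: norm_minus_commute)

lemma reg0: "x \<in> C \<Longrightarrow> 0 \<in> reg_normal_cone C x"
  unfolding reg_normal_cone_def by (auto intro!: exI[of _ 1])

lemma reg_scale:
  assumes "v \<in> reg_normal_cone C x" "c > 0"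
  shows "c *\<^sub>R v \<in> reg_normal_cone C x"
proof -
  have xC: "x \<in> C" using assms(1) unfolding reg_normal_cone_def by (auto split: if_splits)
  have "\<exists>d>0. \<forall>y\<in>C. norm (y - x) < d \<longrightarrow> inner (c *\<^sub>R v) (y - x) \<le> e * norm (y - x)" if "e > 0" for e
  proof -
    from assms(1) xC obtain d where d: "d > 0" "\<forall>y\<in>C. norm (y - x) < d \<longrightarrow> inner v (y - x) \<le> (e/c) * norm (y - x)"
      unfolding reg_normal_cone_def using \<open>e>0\<close> \<open>c>0\<close> by (auto dest!: spec[of _ "e/c"])
    show ?thesis
    proof (intro exI[of _ d] conjI ballI impI)
      fix y assume "y \<in> C" "norm (y - x) < d"
      with d have "inner v (y - x) \<le> (e/c) * norm (y - x)" by auto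
      then have "c * inner v (y - x) \<le> c * ((e/c) * norm (y - x))" using \<open>c>0\<close> by (intro mult_left_mono) auto
      also have "c * ((e/c) * norm (y - x)) = e * norm (y - x)" using \<open>c>0\<close> by simp
      finally show "inner (c *\<^sub>R v) (y - x) \<le> e * norm (y - x)" using \<open>c>0\<close> by simp
    qed (rule d)
  qed
  then show ?thesis using xC unfolding reg_normal_cone_def by auto
qed

lemma reg_sub_normal:
  assumes "v \<in> reg_normal_cone C x"
  shows "v \<in> normal_cone C x"
proof -
  have xC: "x \<in> C" using assms(1) unfolding reg_normal_cone_def by (auto split: if_splits)
  have "\<exists>xs vs. (\<forall>k. xs k \<in> C \<and> vs k \<in> reg_normal_cone C (xs k)) \<and> xs \<longlonglongrightarrow> x \<and> vs \<longlonglongrightarrow> v"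
    by (rule exI[of _ "\<lambda>_. x"], rule exI[of _ "\<lambda>_. v"]) (use xC assms in auto)
  then show ?thesis unfolding normal_cone_def using xC by auto
qed

lemma hypomonotone:
  fixes C :: "'a::euclidean_space set"
  assumes "xb \<in> C" "prox_regular_at C xb"
  obtains e \<rho> where "e > 0" "\<rho> > 0" "closed (C \<inter> cball xb e)"
    "\<And>x y v. x \<in> C \<inter> ball xb e \<Longrightarrow> y \<in> C \<inter> ball xb e \<Longrightarrow> v \<in> reg_normal_cone C x \<Longrightarrow>
        inner v (y - x) \<le> \<rho> * norm v * (norm (y - x))\<^sup>2"
proof -
  from assms(2) obtain r where r: "r > 0" "closed (C \<inter> cball xb r)"
    unfolding prox_regular_at_def locally_closed_at_def by auto
  have "0 \<in> normal_cone C xb" using reg_sub_normal[OF reg0[OF assms(1)]] .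
  with assms(2) obtain e \<rho>0 where e: "e > 0" "\<rho>0 > 0" and
    H: "\<And>x y v. x\<in>C \<inter> ball xb e \<Longrightarrow> y\<in>C \<inter> ball xb e \<Longrightarrow> v\<in>normal_cone C x \<inter> ball 0 e \<Longrightarrow>
           inner v (y - x) \<le> \<rho>0 * (norm (y - x))\<^sup>2"
    unfolding prox_regular_at_def by blast
  define e' where "e' = min e r"
  have e'p: "e' > 0" using e r by (simp add: e'_def)
  have cl: "closed (C \<inter> cball xb e')"
  proof -
    have "C \<inter> cball xb e' = (C \<inter> cball xb r) \<inter> cball xb e'" by (auto simp: e'_def)
    then show ?thesis using r by (metis closed_Int closed_cball)
  qed
  show ?thesis
  proof (rule that[OF e'p _ cl])
    show "2 * \<rho>0 / e > 0" using e by simp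
  next
    fix x y v assume x: "x \<in> C \<inter> ball xb e'" and y: "y \<in> C \<inter> ball xb e'" and v: "v \<in> reg_normal_cone C x"
    show "inner v (y - x) \<le> 2 * \<rho>0 / e * norm v * (norm (y - x))\<^sup>2"
    proof (cases "v = 0")
      case True then show ?thesis by simp
    next
      case False
      define c where "c = e / (2 * norm v)"
      have c: "c > 0" using False e by (simp add: c_def)
      have w: "c *\<^sub>R v \<in> normal_cone C x" using reg_sub_normal[OF reg_scale[OF v c]] .
      have nw: "norm (c *\<^sub>R v) = e/2" using False e(1) by (simp add: c_def)
      have "x \<in> C \<inter> ball xb e" "y \<in> C \<inter> ball xb e" using x y by (auto simp: e'_def)
      moreover have "c *\<^sub>R v \<in> ball 0 e" using nw e by (simp add: dist_norm)
      ultimately have "inner (c *\<^sub>R v) (y - x) \<le> \<rho>0 * (norm (y - x))\<^sup>2" using H w by blast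
      then have "c * inner v (y - x) \<le> \<rho>0 * (norm (y - x))\<^sup>2" by simp
      then have "inner v (y - x) \<le> \<rho>0 * (norm (y - x))\<^sup>2 / c" using c by (simp add: field_simps)
      also have "\<rho>0 * (norm (y - x))\<^sup>2 / c = 2 * \<rho>0 / e * norm v * (norm (y - x))\<^sup>2"
        using False e by (simp add: c_def field_simps)
      finally show ?thesis .
    qed
  qed
qed

lemma lip_core:
  fixes u u' p p' :: "'a::real_inner"
  assumes h1: "inner (u - p) (p' - p) \<le> \<rho> * norm (u - p) * (norm (p' - p))\<^sup>2"
  and h2: "inner (u' - p') (p - p') \<le> \<rho> * norm (u' - p') * (norm (p - p'))\<^sup>2"
  and eta: "norm (u - p) \<le> \<eta>" "norm (u' - p') \<le> \<eta>" and small: "2 * \<rho> * \<eta> < 1" and rhopos: "\<rho> > 0"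
  shows "norm (p - p') \<le> norm (u - u') / (1 - 2 * \<rho> * \<eta>)"
proof -
  have npp: "norm (p - p') = norm (p' - p)" by (rule norm_minus_commute)
  define N where "N = (norm (p' - p))\<^sup>2"
  have N0: "N \<ge> 0" by (simp add: N_def)
  have a1: "\<rho> * norm (u - p) * N \<le> \<rho> * \<eta> * N"
    using eta(1) rhopos N0 by (intro mult_right_mono mult_left_mono) auto
  have a2: "\<rho> * norm (u' - p') * N \<le> \<rho> * \<eta> * N"
    using eta(2) rhopos N0 by (intro mult_right_mono mult_left_mono) auto
  have id: "inner (u - p) (p' - p) + inner (u' - p') (p - p') = inner (u - u') (p' - p) + N"
  proof -
    have "inner (u' - p') (p - p') = - inner (u' - p') (p' - p)"
      by (metis inner_minus_right minus_diff_eq)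
    then have "inner (u - p) (p' - p) + inner (u' - p') (p - p') = inner ((u - p) - (u' - p')) (p' - p)"
      by (simp add: inner_diff_left)
    also have "(u - p) - (u' - p') = (u - u') + (p' - p)" by (simp add: algebra_simps)
    finally show ?thesis by (simp add: inner_add_left power2_norm_eq_inner N_def)
  qed
  have cs: "- inner (u - u') (p' - p) \<le> norm (u - u') * norm (p' - p)"
    by (metis Cauchy_Schwarz_ineq2 abs_le_iff)
  have h2': "inner (u' - p') (p - p') \<le> \<rho> * norm (u' - p') * N"
    using h2 npp by (simp add: N_def)
  have h1': "inner (u - p) (p' - p) \<le> \<rho> * norm (u - p) * N"
    using h1 by (simp add: N_def)
  have "N \<le> 2 * (\<rho> * \<eta> * N) + norm (u - u') * norm (p' - p)"
    using id cs h1' h2' a1 a2 by linarith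
  then have "(1 - 2 * \<rho> * \<eta>) * N \<le> norm (u - u') * norm (p' - p)"
    by (simp add: algebra_simps)
  then have main: "((1 - 2 * \<rho> * \<eta>) * norm (p' - p)) * norm (p' - p) \<le> norm (u - u') * norm (p' - p)"
    by (simp add: N_def power2_eq_square mult.assoc)
  have "(1 - 2 * \<rho> * \<eta>) * norm (p' - p) \<le> norm (u - u')"
  proof (cases "norm (p' - p) = 0")
    case True then show ?thesis by simp
  next
    case False then have "norm (p' - p) > 0" by simp
    with main show ?thesis by (rule mult_right_le_imp_le)
  qed
  then have "norm (p' - p) \<le> norm (u - u') / (1 - 2 * \<rho> * \<eta>)"
    using small by (simp add: pos_le_divide_eq mult.commute)
  then show ?thesis by (simp add: norm_minus_commute)
qed


locale prox =
  fixes C :: "'a::euclidean_space set" and xb :: 'a and R \<rho> :: real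
  assumes Rpos: "R > 0" and rhopos: "\<rho> > 0" and xbC: "xb \<in> C"
    and Kclosed: "closed (C \<inter> cball xb R)"
    and hypo: "\<And>x y v. x \<in> C \<inter> ball xb R \<Longrightarrow> y \<in> C \<inter> ball xb R \<Longrightarrow> v \<in> reg_normal_cone C x \<Longrightarrow>
        inner v (y - x) \<le> \<rho> * norm v * (norm (y - x))\<^sup>2"
begin

definition "K = C \<inter> cball xb R"
definition "proj u = (SOME p. p \<in> K \<and> (\<forall>y\<in>K. norm (u - p) \<le> norm (u - y)))"

lemma proj_ex: "proj u \<in> K \<and> (\<forall>y\<in>K. norm (u - proj u) \<le> norm (u - y))"
proof -
  have "closed K" "K \<noteq> {}" using Kclosed xbC Rpos by (auto simp: K_def)
  then obtain p where "p \<in> K" "\<And>y. y \<in> K \<Longrightarrow> dist u p \<le> dist u y"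
    using distance_attains_inf by blast
  then have "\<exists>p. p \<in> K \<and> (\<forall>y\<in>K. norm (u - p) \<le> norm (u - y))" by (auto simp: dist_norm)
  then show ?thesis unfolding proj_def by (rule someI_ex)
qed

lemma proj_K: "proj u \<in> K" and proj_min: "y \<in> K \<Longrightarrow> norm (u - proj u) \<le> norm (u - y)"
  using proj_ex by auto

lemma proj_id: "a \<in> K \<Longrightarrow> proj a = a"
  using proj_min[of a a] by simp

lemma proj_near:
  assumes "norm (u - xb) < R/2"
  shows "norm (u - proj u) < R/2" "norm (proj u - xb) < R"
proof -
  have "xb \<in> K" using xbC Rpos by (auto simp: K_def)
  then have "norm (u - proj u) \<le> norm (u - xb)" by (rule proj_min)
  then show 1: "norm (u - proj u) < R/2" using assms by simp
  have "norm (proj u - xb) \<le> norm (u - xb) + norm ((proj u - xb) - (u - xb))"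
    by (rule norm_triangle_sub)
  then have "norm (proj u - xb) \<le> norm (u - proj u) + norm (u - xb)"
    by (simp add: norm_minus_commute)
  then show "norm (proj u - xb) < R" using 1 assms by simp
qed

lemma proj_normal:
  assumes "norm (u - xb) < R/2"
  shows "u - proj u \<in> reg_normal_cone C (proj u)"
proof -
  define p where "p = proj u"
  have pK: "p \<in> K" using proj_K by (simp add: p_def)
  have pR: "norm (p - xb) < R" using proj_near[OF assms] by (simp add: p_def)
  have "\<exists>d>0. \<forall>y\<in>C. norm (y - p) < d \<longrightarrow> inner (u - p) (y - p) \<le> e * norm (y - p)" if "e > 0" for e
  proof (intro exI[of _ "min (2*e) (R - norm (p - xb))"] conjI ballI impI)
    show "0 < min (2*e) (R - norm (p - xb))" using that pR by simp
    fix y assume yC: "y \<in> C" and yd: "norm (y - p) < min (2*e) (R - norm (p - xb))"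
    have "norm (y - xb) \<le> norm (p - xb) + norm ((y - xb) - (p - xb))"
      by (rule norm_triangle_sub)
    then have "norm (y - xb) \<le> norm (y - p) + norm (p - xb)" by simp
    then have "y \<in> K" using yC yd by (auto simp: K_def dist_norm norm_minus_commute)
    then have "norm (u - p) \<le> norm (u - y)" using proj_min by (simp add: p_def)
    then have "(norm (u - p))\<^sup>2 \<le> (norm (u - y))\<^sup>2" by (simp add: power_mono)
    moreover have "(norm (u - y))\<^sup>2 = (norm (u - p))\<^sup>2 - 2 * inner (u - p) (y - p) + (norm (y - p))\<^sup>2"
    proof -
      have e1: "u - y = (u - p) - (y - p)" by simp
      show ?thesis by (subst e1, rule nsq_diff)
    qed
    ultimately have "(norm (u - p))\<^sup>2 \<le> (norm (u - p))\<^sup>2 - 2 * inner (u - p) (y - p) + (norm (y - p))\<^sup>2"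
      by linarith
    moreover have "norm (y - p) * norm (y - p) \<le> 2 * e * norm (y - p)"
      using yd by (intro mult_right_mono) auto
    moreover have "(norm (y - p))\<^sup>2 = norm (y - p) * norm (y - p)" by (simp add: power2_eq_square)
    ultimately show "inner (u - p) (y - p) \<le> e * norm (y - p)" by linarith
  qed
  moreover have "p \<in> C" using pK by (simp add: K_def)
  ultimately have "u - p \<in> reg_normal_cone C p" unfolding reg_normal_cone_def by simp
  then show ?thesis by (simp add: p_def)
qed

lemma proj_ball: "norm (u - xb) < R/2 \<Longrightarrow> proj u \<in> C \<inter> ball xb R"
  using proj_K proj_near(2)[of u] by (auto simp: K_def dist_norm norm_minus_commute)

lemma proj_lip:
  assumes u: "norm (u - xb) < R/2" and u': "norm (u' - xb) < R/2"
    and eta: "norm (u - proj u) \<le> \<eta>" "norm (u' - proj u') \<le> \<eta>" and small: "2 * \<rho> * \<eta> < 1"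
  shows "norm (proj u - proj u') \<le> norm (u - u') / (1 - 2 * \<rho> * \<eta>)"
proof -
  have pB: "proj u \<in> C \<inter> ball xb R" "proj u' \<in> C \<inter> ball xb R" using proj_ball u u' by auto
  show ?thesis
    by (rule lip_core[OF hypo[OF pB(1) pB(2) proj_normal[OF u]] hypo[OF pB(2) pB(1) proj_normal[OF u']] eta small rhopos])
qed

end

context prox begin

lemma seg_ball:
  assumes a: "norm (a - xb) < R/2" and b: "norm (b - xb) < R/2" and t: "0 \<le> t" "t \<le> 1"
  shows "norm ((a + t *\<^sub>R (b - a)) - xb) < R/2"
proof -
  have eq: "(a + t *\<^sub>R (b - a)) - xb = (1 - t) *\<^sub>R (a - xb) + t *\<^sub>R (b - xb)"
    by (simp add: algebra_simps)
  define M where "M = max (norm (a - xb)) (norm (b - xb))"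
  have "norm ((1 - t) *\<^sub>R (a - xb) + t *\<^sub>R (b - xb)) \<le> norm ((1 - t) *\<^sub>R (a - xb)) + norm (t *\<^sub>R (b - xb))"
    by (rule norm_triangle_ineq)
  also have "\<dots> = (1 - t) * norm (a - xb) + t * norm (b - xb)" using t by simp
  also have "\<dots> \<le> (1 - t) * M + t * M"
    using t by (intro add_mono mult_left_mono) (auto simp: M_def)
  also have "\<dots> = M" by (simp add: algebra_simps)
  finally show ?thesis using a b eq by (simp add: M_def)
qed

lemma seg_dist:
  assumes a: "a \<in> C" "norm (a - xb) < R/2" and b: "b \<in> C" "norm (b - xb) < R/2" and t: "0 \<le> t" "t \<le> 1"
  shows "norm ((a + t *\<^sub>R (b - a)) - proj (a + t *\<^sub>R (b - a))) \<le> 4 * \<rho> * (norm (b - a))\<^sup>2"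
proof -
  define z where "z = a + t *\<^sub>R (b - a)"
  define p where "p = proj z"
  define w where "w = z - p"
  define n where "n = norm (b - a)"
  have zb: "norm (z - xb) < R/2" using seg_ball[OF a(2) b(2) t] by (simp add: z_def)
  have aK: "a \<in> K" and bK: "b \<in> K" using a b Rpos by (auto simp: K_def dist_norm norm_minus_commute)
  have aB: "a \<in> C \<inter> ball xb R" and bB: "b \<in> C \<inter> ball xb R"
    using a b Rpos by (auto simp: dist_norm norm_minus_commute)
  have za: "z - a = t *\<^sub>R (b - a)" by (simp add: z_def)
  have zbb: "z - b = (1 - t) *\<^sub>R (a - b)" by (simp add: z_def algebra_simps)
  have zbn: "norm (z - b) = (1 - t) * n" using t zbb by (simp add: n_def norm_minus_commute)
  have zan: "norm (z - a) = t * n" using t za by (simp add: n_def)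
  have w1: "norm w \<le> t * n"
  proof -
    have "norm w \<le> norm (z - a)" using proj_min[OF aK, of z] by (simp add: w_def p_def)
    then show ?thesis using zan by linarith
  qed
  have w2: "norm w \<le> (1 - t) * n"
  proof -
    have "norm w \<le> norm (z - b)" using proj_min[OF bK, of z] by (simp add: w_def p_def)
    then show ?thesis using zbn by linarith
  qed
  have pB: "p \<in> C \<inter> ball xb R" using proj_ball[OF zb] by (simp add: p_def)
  have nw: "w \<in> reg_normal_cone C p" using proj_normal[OF zb] by (simp add: w_def p_def)
  have ha: "inner w (a - p) \<le> \<rho> * norm w * (norm (a - p))\<^sup>2" using hypo[OF pB aB nw] .
  have hb: "inner w (b - p) \<le> \<rho> * norm w * (norm (b - p))\<^sup>2" using hypo[OF pB bB nw] .
  have na: "norm (a - p) \<le> 2 * n"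
  proof -
    have "a - p = w - (z - a)" by (simp add: w_def)
    then have "norm (a - p) \<le> norm w + norm (z - a)" by (metis norm_triangle_ineq4)
    also have "\<dots> \<le> 2 * t * n"
    proof -
      have "2 * t * n = t * n + t * n" by (simp add: algebra_simps)
      then show ?thesis using w1 zan by linarith
    qed
    also have "\<dots> \<le> 2 * n"
    proof -
      have "0 \<le> (1 - t) * n" using t by (simp add: n_def)
      moreover have "2 * t * n = 2 * n - 2 * ((1 - t) * n)" by (simp add: algebra_simps)
      ultimately show ?thesis by linarith
    qed
    finally show ?thesis .
  qed
  have nb: "norm (b - p) \<le> 2 * n"
  proof -
    have "b - p = w - (z - b)" by (simp add: w_def)
    then have "norm (b - p) \<le> norm w + norm (z - b)" by (metis norm_triangle_ineq4)
    also have "\<dots> \<le> 2 * (1 - t) * n"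
    proof -
      have "2 * (1 - t) * n = (1 - t) * n + (1 - t) * n" by (simp add: algebra_simps)
      then show ?thesis using w2 zbn by linarith
    qed
    also have "\<dots> \<le> 2 * n"
    proof -
      have "0 \<le> t * n" using t by (simp add: n_def)
      moreover have "2 * (1 - t) * n = 2 * n - 2 * (t * n)" by (simp add: algebra_simps)
      ultimately show ?thesis by linarith
    qed
    finally show ?thesis .
  qed
  have na2: "(norm (a - p))\<^sup>2 \<le> 4 * n\<^sup>2"
    using power_mono[OF na, of 2] by (simp add: power_mult_distrib)
  have nb2: "(norm (b - p))\<^sup>2 \<le> 4 * n\<^sup>2"
    using power_mono[OF nb, of 2] by (simp add: power_mult_distrib)
  have key: "(1 - t) * inner w (a - p) + t * inner w (b - p) = (norm w)\<^sup>2"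
  proof -
    have "(1 - t) *\<^sub>R (a - p) + t *\<^sub>R (b - p) = w" by (simp add: w_def z_def algebra_simps)
    then have "inner w ((1 - t) *\<^sub>R (a - p) + t *\<^sub>R (b - p)) = inner w w" by simp
    then show ?thesis by (simp add: inner_add_right power2_norm_eq_inner)
  qed
  have rw: "\<rho> * norm w \<ge> 0" using rhopos by simp
  have "(1 - t) * inner w (a - p) \<le> (1 - t) * (\<rho> * norm w * (4 * n\<^sup>2))"
  proof -
    have "inner w (a - p) \<le> \<rho> * norm w * (4 * n\<^sup>2)"
      using ha mult_left_mono[OF na2 rw] by linarith
    then show ?thesis using t by (intro mult_left_mono) auto
  qed
  moreover have "t * inner w (b - p) \<le> t * (\<rho> * norm w * (4 * n\<^sup>2))"
  proof -
    have "inner w (b - p) \<le> \<rho> * norm w * (4 * n\<^sup>2)"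
      using hb mult_left_mono[OF nb2 rw] by linarith
    then show ?thesis using t by (intro mult_left_mono) auto
  qed
  ultimately have "(norm w)\<^sup>2 \<le> (1 - t) * (\<rho> * norm w * (4 * n\<^sup>2)) + t * (\<rho> * norm w * (4 * n\<^sup>2))"
    using key by linarith
  also have "\<dots> = norm w * (4 * \<rho> * n\<^sup>2)" by (simp add: algebra_simps)
  finally have "norm w * norm w \<le> norm w * (4 * \<rho> * n\<^sup>2)" by (simp add: power2_eq_square)
  then have "norm w \<le> 4 * \<rho> * n\<^sup>2"
  proof (cases "norm w = 0")
    case True
    have "0 \<le> \<rho> * n\<^sup>2" using rhopos by simp
    then show ?thesis using True by simp
  next
    case False
    then show ?thesis using \<open>norm w * norm w \<le> norm w * (4 * \<rho> * n\<^sup>2)\<close> by simp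
  qed
  then show ?thesis by (simp add: w_def p_def z_def n_def)
qed

definition "segq a b = (\<lambda>\<tau>. proj (a + \<tau> *\<^sub>R (b - a)))"
definition "segM a b = norm (b - a) / (1 - 8 * \<rho>\<^sup>2 * (norm (b - a))\<^sup>2)"

lemma segM_le:
  assumes "16 * \<rho>\<^sup>2 * (norm (b - a))\<^sup>2 \<le> 1"
  shows "segM a b \<le> 2 * norm (b - a)" "segM a b \<ge> norm (b - a)"
proof -
  define d where "d = 1 - 8 * \<rho>\<^sup>2 * (norm (b - a))\<^sup>2"
  have d: "d \<ge> 1/2" "d \<le> 1" using assms by (auto simp: d_def)
  have "norm (b - a) * 1 \<le> norm (b - a) * (2 * d)" by (rule mult_left_mono) (use d in auto)
  then have "norm (b - a) \<le> (2 * norm (b - a)) * d" by (simp add: algebra_simps)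
  then show "segM a b \<le> 2 * norm (b - a)" unfolding segM_def d_def[symmetric]
    using d by (simp add: divide_le_eq)
  have "norm (b - a) * d \<le> norm (b - a)" by (rule mult_right_le_one_le) (use d in auto)
  then show "segM a b \<ge> norm (b - a)" unfolding segM_def d_def[symmetric]
    using d by (simp add: le_divide_eq)
qed

lemma seg_path:
  assumes a: "a \<in> C" "norm (a - xb) < R/2" and b: "b \<in> C" "norm (b - xb) < R/2"
    and small: "16 * \<rho>\<^sup>2 * (norm (b - a))\<^sup>2 \<le> 1"
  shows "segq a b 0 = a" "segq a b 1 = b" "\<And>\<tau>. segq a b \<tau> \<in> K"
    "\<And>s t. s \<in> {0..1} \<Longrightarrow> t \<in> {0..1} \<Longrightarrow> norm (segq a b t - segq a b s) \<le> segM a b * \<bar>t - s\<bar>"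
proof -
  have aK: "a \<in> K" and bK: "b \<in> K" using a b Rpos by (auto simp: K_def dist_norm norm_minus_commute)
  show "segq a b 0 = a" using proj_id[OF aK] by (simp add: segq_def)
  show "segq a b 1 = b" using proj_id[OF bK] by (simp add: segq_def)
  show "segq a b \<tau> \<in> K" for \<tau> by (simp add: segq_def proj_K)
  fix s t :: real assume s: "s \<in> {0..1}" and t: "t \<in> {0..1}"
  define u where "u = a + s *\<^sub>R (b - a)"
  define u' where "u' = a + t *\<^sub>R (b - a)"
  define \<eta> where "\<eta> = 4 * \<rho> * (norm (b - a))\<^sup>2"
  have ub: "norm (u - xb) < R/2" "norm (u' - xb) < R/2"
    using seg_ball[OF a(2) b(2)] s t by (auto simp: u_def u'_def)
  have e1: "norm (u - proj u) \<le> \<eta>" "norm (u' - proj u') \<le> \<eta>"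
    using seg_dist[OF a b] s t by (auto simp: u_def u'_def \<eta>_def)
  have e2: "2 * \<rho> * \<eta> = 8 * \<rho>\<^sup>2 * (norm (b - a))\<^sup>2" by (simp add: \<eta>_def power2_eq_square)
  have e3: "8 * \<rho>\<^sup>2 * (norm (b - a))\<^sup>2 = (16 * \<rho>\<^sup>2 * (norm (b - a))\<^sup>2) / 2" by simp
  have sm: "2 * \<rho> * \<eta> < 1" unfolding e2 e3 using small by simp
  have "norm (proj u' - proj u) \<le> norm (u' - u) / (1 - 2 * \<rho> * \<eta>)"
    using proj_lip[OF ub(2) ub(1) e1(2) e1(1) sm] .
  moreover have "norm (u' - u) = \<bar>t - s\<bar> * norm (b - a)"
  proof -
    have "u' - u = (t - s) *\<^sub>R (b - a)" by (simp add: u_def u'_def algebra_simps)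
    then show ?thesis by simp
  qed
  ultimately have "norm (segq a b t - segq a b s) \<le> \<bar>t - s\<bar> * norm (b - a) / (1 - 8 * \<rho>\<^sup>2 * (norm (b - a))\<^sup>2)"
    by (simp add: segq_def e2 u_def u'_def)
  moreover have "\<bar>t - s\<bar> * norm (b - a) / (1 - 8 * \<rho>\<^sup>2 * (norm (b - a))\<^sup>2) = segM a b * \<bar>t - s\<bar>"
    by (simp add: segM_def)
  ultimately show "norm (segq a b t - segq a b s) \<le> segM a b * \<bar>t - s\<bar>" by simp
qed

end

lemma part_mono:
  assumes "\<forall>i<n. (t::nat \<Rightarrow> real) i \<le> t (Suc i)"
  shows "i \<le> j \<Longrightarrow> j \<le> n \<Longrightarrow> t i \<le> t j"
proof (induction j)
  case 0 then show ?case by simp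
next
  case (Suc j)
  show ?case
  proof (cases "i = Suc j")
    case True then show ?thesis by simp
  next
    case False
    then have "i \<le> j" using Suc.prems by simp
    then have "t i \<le> t j" using Suc by simp
    also have "t j \<le> t (Suc j)" using assms Suc.prems by simp
    finally show ?thesis .
  qed
qed

lemma curve_length_le:
  fixes g :: "real \<Rightarrow> 'a::euclidean_space"
  assumes M: "\<And>s t. s \<in> {0..1} \<Longrightarrow> t \<in> {0..1} \<Longrightarrow> norm (g t - g s) \<le> M * \<bar>t - s\<bar>"
  shows "curve_length g \<le> ennreal M"
  unfolding curve_length_def
proof (rule SUP_least, clarify)
  fix n and t :: "nat \<Rightarrow> real"
  assume t0: "t 0 = 0" and tn: "t n = 1" and mono: "\<forall>i<n. t i \<le> t (Suc i)"
  have tin: "t i \<in> {0..1}" if "i \<le> n" for i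
    using part_mono[OF mono, of 0 i] part_mono[OF mono, of i n] that t0 tn by auto
  have "(\<Sum>i<n. norm (g (t (Suc i)) - g (t i))) \<le> (\<Sum>i<n. M * (t (Suc i) - t i))"
  proof (rule sum_mono)
    fix i assume "i \<in> {..<n}"
    then have "i < n" by simp
    then have "norm (g (t (Suc i)) - g (t i)) \<le> M * \<bar>t (Suc i) - t i\<bar>" using M tin by simp
    then show "norm (g (t (Suc i)) - g (t i)) \<le> M * (t (Suc i) - t i)" using mono \<open>i < n\<close> by simp
  qed
  also have "\<dots> = M * (\<Sum>i<n. t (Suc i) - t i)" by (simp add: sum_distrib_left)
  also have "(\<Sum>i<n. t (Suc i) - t i) = t n - t 0" by (rule sum_lessThan_telescope)
  finally have "(\<Sum>i<n. norm (g (t (Suc i)) - g (t i))) \<le> M" using t0 tn by simp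
  then show "ennreal (\<Sum>i<n. norm (g (t (Suc i)) - g (t i))) \<le> ennreal M" by (rule ennreal_leI)
qed

lemma curve_length_ge:
  "ennreal (norm (g 1 - g 0)) \<le> curve_length (g :: real \<Rightarrow> 'a::euclidean_space)"
  unfolding curve_length_def
proof (rule SUP_upper2[of "(1::nat, \<lambda>i::nat. if i = 0 then 0 else (1::real))"])
  show "(1::nat, \<lambda>i::nat. if i = 0 then 0 else (1::real)) \<in> {(n, t). t 0 = 0 \<and> t n = 1 \<and> (\<forall>i<n. t i \<le> t (Suc i))}" by auto
qed auto

lemma intrinsic_ge:
  "ennreal (norm (y - x)) \<le> intrinsic_dist C x (y :: 'a::euclidean_space)"
  unfolding intrinsic_dist_def
proof (rule INF_greatest)
  fix g assume "g \<in> {g. path g \<and> path_image g \<subseteq> C \<and> pathstart g = x \<and> pathfinish g = y}"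
  then have "g 0 = x" "g 1 = y" by (auto simp: pathstart_def pathfinish_def)
  then show "ennreal (norm (y - x)) \<le> curve_length g" using curve_length_ge[of g] by simp
qed

lemma intrinsic_le:
  fixes q :: "real \<Rightarrow> 'a::euclidean_space"
  assumes M: "\<And>s t. s \<in> {0..1} \<Longrightarrow> t \<in> {0..1} \<Longrightarrow> norm (q t - q s) \<le> M * \<bar>t - s\<bar>"
    and M0: "M \<ge> 0" and img: "\<And>t. t \<in> {0..1} \<Longrightarrow> q t \<in> C" and e: "q 0 = x" "q 1 = y"
  shows "intrinsic_dist C x y \<le> ennreal M"
proof -
  have "M-lipschitz_on {0..1} q"
  proof (rule lipschitz_onI)
    fix a c :: real assume "a \<in> {0..1}" "c \<in> {0..1}"
    then have "norm (q a - q c) \<le> M * \<bar>a - c\<bar>" using M[of c a] by simp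
    then show "dist (q a) (q c) \<le> M * dist a c" by (simp add: dist_norm)
  qed (rule M0)
  then have "continuous_on {0..1} q" by (rule lipschitz_on_continuous_on)
  then have "q \<in> {g. path g \<and> path_image g \<subseteq> C \<and> pathstart g = x \<and> pathfinish g = y}"
    using img e by (auto simp: path_def path_image_def pathstart_def pathfinish_def)
  then have "intrinsic_dist C x y \<le> curve_length q" unfolding intrinsic_dist_def by (rule INF_lower)
  also have "\<dots> \<le> ennreal M" by (rule curve_length_le[OF M])
  finally show ?thesis .
qed

lemma two_piece:
  fixes a c :: "'a::real_inner"
  assumes l: "0 \<le> l" "l \<le> h" and L: "L \<ge> 0" and \<delta>: "\<delta> \<ge> 0"
    and na: "norm a \<le> L * l" and nc: "norm c \<le> L * (h - l)"
    and rev: "L * h \<le> norm (a + c) + \<delta>"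
  shows "(norm (h *\<^sub>R a - l *\<^sub>R (a + c)))\<^sup>2 \<le> 2 * L * \<delta> * l * (h - l) * h"
proof -
  define A where "A = (norm a)\<^sup>2"
  define B where "B = (norm c)\<^sup>2"
  define I where "I = inner a c"
  define D where "D = (norm (a + c))\<^sup>2"
  have e1: "h *\<^sub>R a - l *\<^sub>R (a + c) = (h - l) *\<^sub>R a - l *\<^sub>R c" by (simp add: algebra_simps)
  have e2: "(norm ((h - l) *\<^sub>R a - l *\<^sub>R c))\<^sup>2 = (h - l)\<^sup>2 * A - 2 * (h - l) * l * I + l\<^sup>2 * B"
  proof -
    have x1: "(norm ((h - l) *\<^sub>R a))\<^sup>2 = (h - l)\<^sup>2 * A"
      by (simp only: norm_scaleR power_mult_distrib power2_abs A_def)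
    have x2: "(norm (l *\<^sub>R c))\<^sup>2 = l\<^sup>2 * B"
      by (simp only: norm_scaleR power_mult_distrib power2_abs B_def)
    have x3: "inner ((h - l) *\<^sub>R a) (l *\<^sub>R c) = (h - l) * l * I"
      by (simp add: I_def)
    show ?thesis unfolding nsq_diff x1 x2 x3 by (simp add: algebra_simps)
  qed
  have e3: "D = A + 2 * I + B" unfolding D_def A_def B_def I_def by (rule nsq_add)
  have e4: "(norm (h *\<^sub>R a - l *\<^sub>R (a + c)))\<^sup>2 = (h - l) * h * A + l * h * B - l * (h - l) * D"
    unfolding e1 e2 e3 by (simp add: algebra_simps power2_eq_square)
  have hl: "h - l \<ge> 0" using l by simp
  have A: "A \<le> L\<^sup>2 * l\<^sup>2" unfolding A_def using power_mono[OF na, of 2] by (simp add: power_mult_distrib)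
  have B: "B \<le> L\<^sup>2 * (h - l)\<^sup>2" unfolding B_def using power_mono[OF nc, of 2] by (simp add: power_mult_distrib)
  have hA: "(h - l) * h * A \<le> (h - l) * h * (L\<^sup>2 * l\<^sup>2)"
    using A hl l by (intro mult_left_mono) auto
  have hB: "l * h * B \<le> l * h * (L\<^sup>2 * (h - l)\<^sup>2)"
    using B hl l by (intro mult_left_mono) auto
  have sum: "(h - l) * h * (L\<^sup>2 * l\<^sup>2) + l * h * (L\<^sup>2 * (h - l)\<^sup>2) = l * (h - l) * (L\<^sup>2 * h\<^sup>2)"
    by (simp add: algebra_simps power2_eq_square)
  have DD: "L\<^sup>2 * h\<^sup>2 - D \<le> 2 * L * \<delta> * h"
  proof (cases "L * h \<le> \<delta>")
    case True
    have "L * h \<ge> 0" using L l by simp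
    then have "(L * h) * (L * h) \<le> (L * h) * \<delta>" using True by (intro mult_left_mono) auto
    moreover have "D \<ge> 0" by (simp add: D_def)
    moreover have "(L * h) * \<delta> \<ge> 0" using \<open>L * h \<ge> 0\<close> \<delta> by simp
    ultimately show ?thesis by (simp add: power2_eq_square algebra_simps)
  next
    case False
    then have "0 \<le> L * h - \<delta>" by simp
    moreover have "L * h - \<delta> \<le> norm (a + c)" using rev by simp
    ultimately have "(L * h - \<delta>)\<^sup>2 \<le> D" unfolding D_def by (auto intro: power_mono)
    moreover have "(L * h - \<delta>)\<^sup>2 = L\<^sup>2 * h\<^sup>2 - 2 * L * \<delta> * h + \<delta>\<^sup>2" by (simp add: power2_eq_square algebra_simps)
    moreover have "\<delta>\<^sup>2 \<ge> 0" by simp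
    ultimately show ?thesis by linarith
  qed
  have lhl: "l * (h - l) \<ge> 0" using l hl by simp
  have "l * (h - l) * (L\<^sup>2 * h\<^sup>2 - D) \<le> l * (h - l) * (2 * L * \<delta> * h)"
    using DD lhl by (intro mult_left_mono) auto
  then have "l * (h - l) * (L\<^sup>2 * h\<^sup>2) - l * (h - l) * D \<le> 2 * L * \<delta> * l * (h - l) * h"
    by (simp add: algebra_simps)
  then show ?thesis unfolding e4 using hA hB sum by linarith
qed

locale regpath =
  fixes g :: "real \<Rightarrow> 'a::euclidean_space" and L b :: real
  assumes L0: "L \<ge> 0" and b0: "b \<ge> 0"
    and lip: "\<And>s t. s \<in> {0..1} \<Longrightarrow> t \<in> {0..1} \<Longrightarrow> norm (g t - g s) \<le> L * \<bar>t - s\<bar>"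
    and rev: "\<And>s t. s \<in> {0..1} \<Longrightarrow> t \<in> {0..1} \<Longrightarrow> L * \<bar>t - s\<bar> \<le> norm (g t - g s) + b\<^sup>2 * L^3 * \<bar>t - s\<bar>^3"
begin

definition "u s t = (1 / (t - s)) *\<^sub>R (g t - g s)"

lemma u_sym: "u s t = u t s"
proof -
  have "1 / (s - t) = - (1 / (t - s))" by (simp add: divide_simps)
  then have "(1 / (s - t)) *\<^sub>R (g s - g t) = (- (1 / (t - s))) *\<^sub>R (- (g t - g s))" by simp
  also have "\<dots> = (1 / (t - s)) *\<^sub>R (g t - g s)" by (simp only: scaleR_minus_left scaleR_minus_right minus_minus)
  finally show ?thesis unfolding u_def by simp
qed

lemma nested_third:
  assumes st: "0 \<le> s" "s \<le> s'" "s' < t'" "t' \<le> t" "t \<le> 1" and th: "t - s \<le> 3 * (t' - s')"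
  shows "norm (u s' t' - u s t) \<le> 2 * b * L\<^sup>2 * (t - s)"
proof -
  define h l where "h = t - s" and "l = t' - s'"
  define a c where "a = g t' - g s'" and "c = (g t - g s) - (g t' - g s')"
  have l0: "0 < l" "l \<le> h" using st by (auto simp: h_def l_def)
  have in01: "s \<in> {0..1}" "s' \<in> {0..1}" "t' \<in> {0..1}" "t \<in> {0..1}" using st by auto
  have na: "norm a \<le> L * l" using lip[OF in01(2) in01(3)] st by (simp add: a_def l_def)
  have nc: "norm c \<le> L * (h - l)"
  proof -
    have "c = (g s' - g s) + (g t - g t')" by (simp add: c_def algebra_simps)
    then have "norm c \<le> norm (g s' - g s) + norm (g t - g t')" by (simp add: norm_triangle_ineq)
    also have "\<dots> \<le> L * \<bar>s' - s\<bar> + L * \<bar>t - t'\<bar>"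
      using lip[OF in01(1) in01(2)] lip[OF in01(3) in01(4)] by (rule add_mono)
    also have "\<dots> = L * (h - l)" using st by (simp add: h_def l_def algebra_simps)
    finally show ?thesis .
  qed
  have ac: "a + c = g t - g s" by (simp add: a_def c_def)
  have rv: "L * h \<le> norm (a + c) + b\<^sup>2 * L^3 * h^3"
    using rev[OF in01(1) in01(4)] st by (simp add: ac h_def)
  have \<delta>0: "b\<^sup>2 * L^3 * h^3 \<ge> 0" using L0 l0 by simp
  have tp: "(norm (h *\<^sub>R a - l *\<^sub>R (a + c)))\<^sup>2 \<le> 2 * L * (b\<^sup>2 * L^3 * h^3) * l * (h - l) * h"
    by (rule two_piece[OF _ l0(2) L0 \<delta>0 na nc rv]) (use l0 in simp)
  define X where "X = norm (h *\<^sub>R a - l *\<^sub>R (a + c))"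
  have X0: "X \<ge> 0" by (simp add: X_def)
  have hl3: "h - l \<le> 2 * l" using th by (simp add: h_def l_def)
  have "2 * L * (b\<^sup>2 * L^3 * h^3) * l * (h - l) * h = (2 * b\<^sup>2 * L^4 * h^4 * l) * (h - l)"
    by (simp add: algebra_simps power_def)
  also have "\<dots> \<le> (2 * b\<^sup>2 * L^4 * h^4 * l) * (2 * l)"
    using hl3 l0 L0 by (intro mult_left_mono) auto
  also have "\<dots> = (2 * b * L\<^sup>2 * h\<^sup>2 * l)\<^sup>2" by (simp add: algebra_simps power2_eq_square power_def)
  finally have "X\<^sup>2 \<le> (2 * b * L\<^sup>2 * h\<^sup>2 * l)\<^sup>2" using tp by (simp add: X_def)
  then have XX: "X \<le> 2 * b * L\<^sup>2 * h\<^sup>2 * l"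
    by (rule power2_le_imp_le) (use b0 L0 l0 in simp)
  have u1: "u s' t' = (1 / l) *\<^sub>R a" by (simp add: u_def a_def l_def)
  have u2: "u s t = (1 / h) *\<^sub>R (a + c)" by (simp add: u_def ac h_def)
  have h0: "h > 0" using l0 by simp
  have "(1 / (h * l)) *\<^sub>R (h *\<^sub>R a - l *\<^sub>R (a + c)) = ((1 / (h * l)) * h) *\<^sub>R a - ((1 / (h * l)) * l) *\<^sub>R (a + c)"
    by (simp add: scaleR_diff_right)
  also have "(1 / (h * l)) * h = 1 / l" using h0 l0 by simp
  also have "(1 / (h * l)) * l = 1 / h" using h0 l0 by simp
  finally have "u s' t' - u s t = (1 / (h * l)) *\<^sub>R (h *\<^sub>R a - l *\<^sub>R (a + c))"
    using u1 u2 by simp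
  then have "norm (u s' t' - u s t) = X / (h * l)" using l0 by (simp add: X_def)
  also have "\<dots> \<le> (2 * b * L\<^sup>2 * h\<^sup>2 * l) / (h * l)"
    using XX l0 by (intro divide_right_mono) auto
  also have "\<dots> = 2 * b * L\<^sup>2 * (t - s)" using l0 by (simp add: h_def power2_eq_square)
  finally show ?thesis .
qed

end

context regpath begin

lemma nested_pow:
  "\<forall>s t s' t'. 0 \<le> s \<and> s \<le> s' \<and> s' < t' \<and> t' \<le> t \<and> t \<le> 1 \<and> (2/3)^n * (t - s) \<le> t' - s'
     \<longrightarrow> norm (u s' t' - u s t) \<le> 6 * b * L\<^sup>2 * (t - s)"
proof (induction n)
  case 0
  show ?case
  proof (intro allI impI)
    fix s t s' t' :: real
    assume H: "0 \<le> s \<and> s \<le> s' \<and> s' < t' \<and> t' \<le> t \<and> t \<le> 1 \<and> (2/3)^0 * (t - s) \<le> t' - s'"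
    then have "norm (u s' t' - u s t) \<le> 2 * b * L\<^sup>2 * (t - s)" by (intro nested_third) auto
    moreover have "b * L\<^sup>2 * (t - s) \<ge> 0" using H b0 by simp
    ultimately show "norm (u s' t' - u s t) \<le> 6 * b * L\<^sup>2 * (t - s)" by linarith
  qed
next
  case (Suc n)
  show ?case
  proof (intro allI impI)
    fix s t s' t' :: real
    assume H: "0 \<le> s \<and> s \<le> s' \<and> s' < t' \<and> t' \<le> t \<and> t \<le> 1 \<and> (2/3)^Suc n * (t - s) \<le> t' - s'"
    have pos: "b * L\<^sup>2 * (t - s) \<ge> 0" using H b0 by simp
    show "norm (u s' t' - u s t) \<le> 6 * b * L\<^sup>2 * (t - s)"
    proof (cases "t - s \<le> 3 * (t' - s')")
      case True
      then have "norm (u s' t' - u s t) \<le> 2 * b * L\<^sup>2 * (t - s)" using H by (intro nested_third) auto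
      then show ?thesis using pos by linarith
    next
      case False
      define h where "h = t - s"
      define a0 where "a0 = min s' (t - 2 * h / 3)"
      define t0 where "t0 = a0 + 2 * h / 3"
      have f: "s \<le> a0" "a0 \<le> s'" "t' \<le> t0" "t0 \<le> t" "a0 < t0"
        using H False by (auto simp: a0_def t0_def h_def min_def field_simps)
      have eq: "(2/3)^n * (t0 - a0) = (2/3)^Suc n * (t - s)" by (simp add: t0_def h_def)
      have H6: "(2/3)^Suc n * (t - s) \<le> t' - s'" using H by blast
      have "(2/3)^n * (t0 - a0) \<le> t' - s'" unfolding eq by (rule H6)
      then have IH: "norm (u s' t' - u a0 t0) \<le> 6 * b * L\<^sup>2 * (t0 - a0)"
        using Suc.IH H f by auto
      have T: "norm (u a0 t0 - u s t) \<le> 2 * b * L\<^sup>2 * (t - s)"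
        using H f by (intro nested_third) (auto simp: t0_def h_def)
      have "norm (u s' t' - u s t) \<le> norm (u s' t' - u a0 t0) + norm (u a0 t0 - u s t)"
        by (rule tri)
      also have "\<dots> \<le> 6 * b * L\<^sup>2 * (t0 - a0) + 2 * b * L\<^sup>2 * (t - s)" using IH T by simp
      also have "6 * b * L\<^sup>2 * (t0 - a0) = 4 * (b * L\<^sup>2 * (t - s))" by (simp add: t0_def h_def)
      also have "4 * (b * L\<^sup>2 * (t - s)) + 2 * b * L\<^sup>2 * (t - s) = 6 * b * L\<^sup>2 * (t - s)" by (simp add: algebra_simps)
      finally show ?thesis .
    qed
  qed
qed

lemma nested:
  assumes "0 \<le> s" "s \<le> s'" "s' < t'" "t' \<le> t" "t \<le> 1"
  shows "norm (u s' t' - u s t) \<le> 6 * b * L\<^sup>2 * (t - s)"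
proof -
  have "(t' - s') / (t - s) > 0" using assms by simp
  then obtain n where n: "(2/3::real)^n < (t' - s') / (t - s)" using real_arch_pow_inv[of "(t' - s') / (t - s)" "2/3"] by auto
  then have "(2/3)^n * (t - s) \<le> t' - s'" using assms by (simp add: less_divide_eq)
  then show ?thesis using nested_pow[of n] assms by blast
qed

lemma two_int:
  assumes "0 \<le> s1" "s1 \<le> \<tau>" "\<tau> \<le> t1" "s1 < t1" "t1 \<le> 1" "0 \<le> s2" "s2 \<le> \<tau>" "\<tau> \<le> t2" "s2 < t2" "t2 \<le> 1"
  shows "norm (u s1 t1 - u s2 t2) \<le> 12 * b * L\<^sup>2 * ((t1 - s1) + (t2 - s2))"
proof -
  define m M where "m = min s1 s2" and "M = max t1 t2"
  have mM: "0 \<le> m" "m \<le> s1" "m \<le> s2" "t1 \<le> M" "t2 \<le> M" "M \<le> 1" "M - m \<le> (t1 - s1) + (t2 - s2)"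
    using assms by (auto simp: m_def M_def min_def max_def)
  have a: "norm (u s1 t1 - u m M) \<le> 6 * b * L\<^sup>2 * (M - m)" using mM assms by (intro nested) auto
  have c: "norm (u s2 t2 - u m M) \<le> 6 * b * L\<^sup>2 * (M - m)" using mM assms by (intro nested) auto
  have "norm (u s1 t1 - u s2 t2) \<le> norm (u s1 t1 - u m M) + norm (u s2 t2 - u m M)"
    by (rule tri2)
  also have "\<dots> \<le> 12 * b * L\<^sup>2 * (M - m)" using a c by simp
  also have "\<dots> \<le> 12 * b * L\<^sup>2 * ((t1 - s1) + (t2 - s2))"
    using mM b0 by (intro mult_left_mono) auto
  finally show ?thesis .
qed

end

definition "epsn (n::nat) = inverse (real (Suc (Suc n)))"

lemma epsn_pos: "0 < epsn n" and epsn_le: "epsn n \<le> 1/2"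
  by (auto simp: epsn_def field_simps)

lemma epsn_lim: "epsn \<longlonglongrightarrow> 0"
  unfolding epsn_def using LIMSEQ_Suc[OF LIMSEQ_inverse_real_of_nat] .

lemma epsn_mono: "m \<le> n \<Longrightarrow> epsn n \<le> epsn m"
  by (auto simp: epsn_def field_simps)

context regpath begin

definition "lo \<tau> n = (if \<tau> \<le> 1/2 then \<tau> else \<tau> - epsn n)"
definition "hi \<tau> n = (if \<tau> \<le> 1/2 then \<tau> + epsn n else \<tau>)"
definition "v \<tau> n = u (lo \<tau> n) (hi \<tau> n)"
definition "D \<tau> = lim (v \<tau>)"

lemma lohi:
  assumes "\<tau> \<in> {0..1}"
  shows "0 \<le> lo \<tau> n" "lo \<tau> n \<le> \<tau>" "\<tau> \<le> hi \<tau> n" "lo \<tau> n < hi \<tau> n" "hi \<tau> n \<le> 1" "hi \<tau> n - lo \<tau> n = epsn n"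
  using assms epsn_pos[of n] epsn_le[of n] by (auto simp: lo_def hi_def)

lemma v_cauchy:
  assumes "\<tau> \<in> {0..1}"
  shows "norm (v \<tau> m - v \<tau> n) \<le> 12 * b * L\<^sup>2 * (epsn m + epsn n)"
  using two_int[OF lohi(1,2,3,4,5)[OF assms] lohi(1,2,3,4,5)[OF assms]] lohi(6)[OF assms]
  by (simp add: v_def)

lemma v_conv:
  assumes "\<tau> \<in> {0..1}"
  shows "v \<tau> \<longlonglongrightarrow> D \<tau>"
proof -
  define k where "k = 12 * b * L\<^sup>2"
  have k0: "k \<ge> 0" using b0 by (simp add: k_def)
  have "Cauchy (v \<tau>)"
  proof (rule metric_CauchyI)
    fix e :: real assume e: "e > 0"
    have "((\<lambda>n. 2 * k * epsn n) \<longlongrightarrow> 2 * k * 0) sequentially"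
      by (intro tendsto_mult tendsto_const epsn_lim)
    then have "\<forall>\<^sub>F n in sequentially. 2 * k * epsn n < e" using e by (simp add: order_tendsto_iff)
    then obtain M where M: "\<And>n. n \<ge> M \<Longrightarrow> 2 * k * epsn n < e" by (auto simp: eventually_sequentially)
    show "\<exists>M. \<forall>m\<ge>M. \<forall>n\<ge>M. dist (v \<tau> m) (v \<tau> n) < e"
    proof (intro exI[of _ M] allI impI)
      fix m n assume mn: "m \<ge> M" "n \<ge> M"
      have "dist (v \<tau> m) (v \<tau> n) \<le> k * (epsn m + epsn n)"
        using v_cauchy[OF assms] by (simp add: dist_norm k_def)
      also have "\<dots> \<le> k * (epsn M + epsn M)"
        using k0 epsn_mono[OF mn(1)] epsn_mono[OF mn(2)] by (intro mult_left_mono) auto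
      also have "\<dots> < e" using M[of M] by simp
      finally show "dist (v \<tau> m) (v \<tau> n) < e" .
    qed
  qed
  then show ?thesis unfolding D_def by (simp add: Cauchy_convergent_iff convergent_LIMSEQ_iff)
qed

lemma D_bound:
  assumes "0 \<le> s" "s \<le> \<tau>" "\<tau> \<le> t" "s < t" "t \<le> 1"
  shows "norm (u s t - D \<tau>) \<le> 12 * b * L\<^sup>2 * (t - s)"
proof -
  have \<tau>: "\<tau> \<in> {0..1}" using assms by auto
  define k where "k = 12 * b * L\<^sup>2"
  have b: "norm (u s t - v \<tau> n) \<le> k * ((t - s) + epsn n)" for n
    using two_int[OF assms(1,2,3,4,5) lohi(1,2,3,4,5)[OF \<tau>]] lohi(6)[OF \<tau>]
    by (simp add: v_def k_def)
  have l1: "((\<lambda>n. norm (u s t - v \<tau> n)) \<longlongrightarrow> norm (u s t - D \<tau>)) sequentially"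
    by (intro tendsto_norm tendsto_diff tendsto_const v_conv[OF \<tau>])
  have l2: "((\<lambda>n. k * ((t - s) + epsn n)) \<longlongrightarrow> k * ((t - s) + 0)) sequentially"
    by (intro tendsto_mult tendsto_add tendsto_const epsn_lim)
  have "norm (u s t - D \<tau>) \<le> k * ((t - s) + 0)"
    by (rule tendsto_le[OF _ l2 l1]) (auto intro: always_eventually b)
  then show ?thesis by (simp add: k_def)
qed

lemma deriv_est:
  assumes "\<tau> \<in> {0..1}" "t \<in> {0..1}"
  shows "norm (g t - g \<tau> - (t - \<tau>) *\<^sub>R D \<tau>) \<le> 12 * b * L\<^sup>2 * (t - \<tau>)\<^sup>2"
proof (cases "t = \<tau>")
  case True then show ?thesis by simp
next
  case False
  define k where "k = 12 * b * L\<^sup>2"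
  have k0: "k \<ge> 0" using b0 by (simp add: k_def)
  show ?thesis
  proof (cases "\<tau> < t")
    case True
    have "g t - g \<tau> = (t - \<tau>) *\<^sub>R u \<tau> t" using True by (simp add: u_def)
    then have "g t - g \<tau> - (t - \<tau>) *\<^sub>R D \<tau> = (t - \<tau>) *\<^sub>R (u \<tau> t - D \<tau>)" by (simp add: scaleR_diff_right)
    then have "norm (g t - g \<tau> - (t - \<tau>) *\<^sub>R D \<tau>) = (t - \<tau>) * norm (u \<tau> t - D \<tau>)" using True by simp
    also have "\<dots> \<le> (t - \<tau>) * (k * (t - \<tau>))"
      using D_bound[of \<tau> \<tau> t] assms True by (intro mult_left_mono) (auto simp: k_def)
    finally show ?thesis by (simp add: k_def power2_eq_square algebra_simps)
  next
    case False
    then have lt: "t < \<tau>" using \<open>t \<noteq> \<tau>\<close> by simp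
    have "g t - g \<tau> = (t - \<tau>) *\<^sub>R u t \<tau>"
    proof -
      have "(t - \<tau>) *\<^sub>R u t \<tau> = ((t - \<tau>) / (\<tau> - t)) *\<^sub>R (g \<tau> - g t)" by (simp add: u_def)
      also have "(t - \<tau>) / (\<tau> - t) = -1" using lt by (simp add: divide_simps)
      finally show ?thesis by simp
    qed
    then have "g t - g \<tau> - (t - \<tau>) *\<^sub>R D \<tau> = (t - \<tau>) *\<^sub>R (u t \<tau> - D \<tau>)" by (simp add: scaleR_diff_right)
    then have "norm (g t - g \<tau> - (t - \<tau>) *\<^sub>R D \<tau>) = (\<tau> - t) * norm (u t \<tau> - D \<tau>)" using lt by simp
    also have "\<dots> \<le> (\<tau> - t) * (k * (\<tau> - t))"
      using D_bound[of t \<tau> \<tau>] assms lt by (intro mult_left_mono) (auto simp: k_def)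
    finally show ?thesis by (simp add: k_def power2_eq_square algebra_simps)
  qed
qed

lemma D_lip:
  assumes "\<tau> \<in> {0..1}" "\<sigma> \<in> {0..1}"
  shows "norm (D \<tau> - D \<sigma>) \<le> 24 * b * L\<^sup>2 * \<bar>\<tau> - \<sigma>\<bar>"
proof (cases "\<tau> = \<sigma>")
  case True then show ?thesis by simp
next
  case False
  define s t where "s = min \<tau> \<sigma>" and "t = max \<tau> \<sigma>"
  have st: "0 \<le> s" "s < t" "t \<le> 1" "s \<le> \<tau>" "\<tau> \<le> t" "s \<le> \<sigma>" "\<sigma> \<le> t" "t - s = \<bar>\<tau> - \<sigma>\<bar>"
    using assms False by (auto simp: s_def t_def min_def max_def)
  have "norm (D \<tau> - D \<sigma>) \<le> norm (u s t - D \<tau>) + norm (u s t - D \<sigma>)"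
    using tri[of "D \<tau>" "D \<sigma>" "u s t"] by (simp add: norm_minus_commute)
  also have "\<dots> \<le> 12 * b * L\<^sup>2 * (t - s) + 12 * b * L\<^sup>2 * (t - s)"
    using D_bound[of s \<tau> t] D_bound[of s \<sigma> t] st by (intro add_mono) auto
  also have "\<dots> = 24 * b * L\<^sup>2 * \<bar>\<tau> - \<sigma>\<bar>" using st(8) by (simp add: algebra_simps)
  finally show ?thesis .
qed

lemma D_chord:
  assumes "\<tau> \<in> {0..1}"
  shows "norm (D \<tau> - (g 1 - g 0)) \<le> 12 * b * L\<^sup>2"
  using D_bound[of 0 \<tau> 1] assms by (simp add: u_def norm_minus_commute)

end

lemma quad_deriv:
  fixes G :: "real \<Rightarrow> 'a::real_normed_vector"
  assumes Q: "Q \<ge> 0" and H: "\<And>t. norm (G t - G \<tau> - (t - \<tau>) *\<^sub>R V) \<le> Q * (t - \<tau>)\<^sup>2"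
  shows "(G has_vector_derivative V) (at \<tau>)"
  unfolding has_vector_derivative_def has_derivative_iff_norm
proof (intro conjI)
  show "bounded_linear (\<lambda>h. h *\<^sub>R V)" by (rule bounded_linear_scaleR_left)
  have lim: "((\<lambda>y. y - \<tau>) \<longlongrightarrow> 0) (at \<tau>)"
    using LIM_zero[OF tendsto_ident_at[of \<tau> UNIV]] by simp
  show "((\<lambda>y. norm (G y - G \<tau> - (y - \<tau>) *\<^sub>R V) / norm (y - \<tau>)) \<longlongrightarrow> 0) (at \<tau>)"
  proof (rule tendsto_0_le[OF lim, of _ Q], rule always_eventually, rule allI)
    fix y
    show "norm (norm (G y - G \<tau> - (y - \<tau>) *\<^sub>R V) / norm (y - \<tau>)) \<le> norm (y - \<tau>) * Q"
    proof (cases "y = \<tau>")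
      case True then show ?thesis by simp
    next
      case False
      then have p: "\<bar>y - \<tau>\<bar> > 0" by simp
      have "norm (G y - G \<tau> - (y - \<tau>) *\<^sub>R V) \<le> Q * (y - \<tau>)\<^sup>2" by (rule H)
      also have "Q * (y - \<tau>)\<^sup>2 = (\<bar>y - \<tau>\<bar> * Q) * \<bar>y - \<tau>\<bar>" by (simp add: power2_eq_square abs_mult_self_eq)
      finally have "norm (G y - G \<tau> - (y - \<tau>) *\<^sub>R V) / \<bar>y - \<tau>\<bar> \<le> \<bar>y - \<tau>\<bar> * Q"
        using p by (simp add: divide_le_eq)
      then show ?thesis by simp
    qed
  qed
qed

definition "clmp (t::real) = max 0 (min 1 t)"

lemma clmp_in: "clmp t \<in> {0..1}" by (auto simp: clmp_def)
lemma clmp_id: "t \<in> {0..1} \<Longrightarrow> clmp t = t" by (auto simp: clmp_def)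
lemma clmp_lip: "\<bar>clmp t - clmp s\<bar> \<le> \<bar>t - s\<bar>" by (auto simp: clmp_def max_def min_def)
lemma clmp_cont: "continuous_on UNIV clmp" unfolding clmp_def by (intro continuous_intros)
lemma clmp_out: "clmp t \<noteq> clmp s \<Longrightarrow> \<bar>t - clmp t\<bar> \<le> \<bar>t - s\<bar>"
  by (auto simp: clmp_def max_def min_def split: if_splits)

context regpath begin

definition "G t = g (clmp t) + (t - clmp t) *\<^sub>R D (clmp t)"
definition "G' t = D (clmp t)"

lemma G_quad: "norm (G t - G \<tau> - (t - \<tau>) *\<^sub>R G' \<tau>) \<le> 36 * b * L\<^sup>2 * (t - \<tau>)\<^sup>2"
proof -
  define s \<sigma> where "s = clmp t" and "\<sigma> = clmp \<tau>"
  define k where "k = 12 * b * L\<^sup>2"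
  have k0: "k \<ge> 0" using b0 by (simp add: k_def)
  have si: "s \<in> {0..1}" "\<sigma> \<in> {0..1}" unfolding s_def \<sigma>_def by (rule clmp_in)+
  have idt: "G t - G \<tau> - (t - \<tau>) *\<^sub>R G' \<tau> = (g s - g \<sigma> - (s - \<sigma>) *\<^sub>R D \<sigma>) + (t - s) *\<^sub>R (D s - D \<sigma>)"
    by (simp add: G_def G'_def s_def[symmetric] \<sigma>_def[symmetric] algebra_simps)
  have l1: "\<bar>s - \<sigma>\<bar> \<le> \<bar>t - \<tau>\<bar>" unfolding s_def \<sigma>_def by (rule clmp_lip)
  have e1: "norm (g s - g \<sigma> - (s - \<sigma>) *\<^sub>R D \<sigma>) \<le> k * (s - \<sigma>)\<^sup>2"
    using deriv_est[OF si(2) si(1)] by (simp add: k_def)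
  have sq: "(s - \<sigma>)\<^sup>2 \<le> (t - \<tau>)\<^sup>2" using l1 by (simp add: abs_le_square_iff)
  have e2: "norm ((t - s) *\<^sub>R (D s - D \<sigma>)) \<le> 2 * k * (t - \<tau>)\<^sup>2"
  proof (cases "s = \<sigma>")
    case True then show ?thesis using k0 by simp
  next
    case False
    have ts: "\<bar>t - s\<bar> \<le> \<bar>t - \<tau>\<bar>" using clmp_out[of t \<tau>] False by (simp add: s_def \<sigma>_def)
    have "norm ((t - s) *\<^sub>R (D s - D \<sigma>)) = \<bar>t - s\<bar> * norm (D s - D \<sigma>)" by simp
    also have "\<dots> \<le> \<bar>t - \<tau>\<bar> * (2 * k * \<bar>s - \<sigma>\<bar>)"
      using ts D_lip[OF si] by (intro mult_mono) (auto simp: k_def)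
    also have "\<dots> \<le> \<bar>t - \<tau>\<bar> * (2 * k * \<bar>t - \<tau>\<bar>)"
      using l1 k0 by (intro mult_left_mono) auto
    also have "\<dots> = 2 * k * (t - \<tau>)\<^sup>2" by (simp add: power2_eq_square abs_mult_self_eq algebra_simps)
    finally show ?thesis .
  qed
  have "norm (G t - G \<tau> - (t - \<tau>) *\<^sub>R G' \<tau>) \<le> norm (g s - g \<sigma> - (s - \<sigma>) *\<^sub>R D \<sigma>) + norm ((t - s) *\<^sub>R (D s - D \<sigma>))"
    unfolding idt by (rule norm_triangle_ineq)
  also have "\<dots> \<le> k * (t - \<tau>)\<^sup>2 + 2 * k * (t - \<tau>)\<^sup>2"
    using e1 e2 mult_left_mono[OF sq k0] by linarith
  also have "\<dots> = 36 * b * L\<^sup>2 * (t - \<tau>)\<^sup>2" by (simp add: k_def algebra_simps)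
  finally show ?thesis .
qed

lemma regularity:
  "\<exists>G G'. (\<forall>t\<in>{0..1}. G t = g t) \<and> (\<forall>t. (G has_vector_derivative G' t) (at t)) \<and>
     continuous_on UNIV G' \<and> (\<forall>t\<in>{0..1}. norm (G' t - (g 1 - g 0)) \<le> 12 * b * L\<^sup>2)"
proof -
  have f1: "\<forall>t\<in>{0..1}. G t = g t" by (simp add: G_def clmp_id)
  have f2: "\<forall>t. (G has_vector_derivative G' t) (at t)"
  proof
    fix t
    have "36 * b * L\<^sup>2 \<ge> 0" using b0 by simp
    then show "(G has_vector_derivative G' t) (at t)" by (rule quad_deriv) (rule G_quad)
  qed
  have "(24 * b * L\<^sup>2)-lipschitz_on {0..1} D"
    by (rule lipschitz_onI) (use D_lip b0 in \<open>auto simp: dist_norm\<close>)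
  then have cD: "continuous_on {0..1} D" by (rule lipschitz_on_continuous_on)
  have f3: "continuous_on UNIV G'" unfolding G'_def
    by (rule continuous_on_compose2[OF cD clmp_cont]) (use clmp_in in blast)
  have f4: "\<forall>t\<in>{0..1}. norm (G' t - (g 1 - g 0)) \<le> 12 * b * L\<^sup>2"
    using D_chord by (simp add: G'_def clmp_id)
  show ?thesis using f1 f2 f3 f4 by blast
qed

end

lemma rev_arith:
  fixes X n \<rho> :: real
  assumes "0 \<le> n" "0 \<le> X" "n \<le> X" "16 * \<rho>\<^sup>2 * n\<^sup>2 \<le> 1" "X \<le> n / (1 - 8 * \<rho>\<^sup>2 * n\<^sup>2)"
  shows "X \<le> n + (3 * \<rho>)\<^sup>2 * X^3"
proof -
  define d where "d = 1 - 8 * \<rho>\<^sup>2 * n\<^sup>2"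
  have d: "d > 0" using assms(4) by (simp add: d_def)
  have "X * d \<le> n" using assms(5) d by (simp add: d_def[symmetric] le_divide_eq)
  then have "X \<le> n + 8 * \<rho>\<^sup>2 * n\<^sup>2 * X" by (simp add: d_def algebra_simps)
  moreover have "n\<^sup>2 \<le> X\<^sup>2" using assms(1,3) by (auto intro: power_mono)
  then have "8 * \<rho>\<^sup>2 * n\<^sup>2 * X \<le> 8 * \<rho>\<^sup>2 * X\<^sup>2 * X"
    using assms(2) by (intro mult_right_mono mult_left_mono) auto
  moreover have "8 * \<rho>\<^sup>2 * X\<^sup>2 * X \<le> (3 * \<rho>)\<^sup>2 * X^3"
  proof -
    have "0 \<le> \<rho>\<^sup>2 * X^3" using assms(2) by simp
    then show ?thesis by (simp add: power2_eq_square power3_eq_cube algebra_simps)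
  qed
  ultimately show ?thesis by linarith
qed

context prox begin

lemma avg_regular:
  assumes x: "x \<in> C" "norm (x - xb) < \<delta>" and x': "x' \<in> C" "norm (x' - xb) < \<delta>"
    and \<delta>: "\<delta> \<le> R/10" "256 * \<rho>\<^sup>2 * \<delta>\<^sup>2 \<le> 1"
    and avg: "averaging_map C x x' \<gamma>"
  shows "\<exists>Lr. 0 \<le> Lr \<and> Lr \<le> 2 * norm (x' - x) \<and> regpath \<gamma> Lr (3 * \<rho>)"
proof -
  have \<delta>0: "\<delta> > 0" using x by (meson le_less_trans norm_ge_zero)
  have xR: "norm (x - xb) < R/2" "norm (x' - xb) < R/2" using x x' \<delta> Rpos by auto
  have nxx: "norm (x' - x) < 2 * \<delta>"
    using tri[of x' x xb] x x' by (simp add: norm_minus_commute)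
  have sqsmall: "16 * \<rho>\<^sup>2 * y\<^sup>2 \<le> 1" if "0 \<le> y" "y \<le> 4 * \<delta>" for y
  proof -
    have "y\<^sup>2 \<le> (4 * \<delta>)\<^sup>2" by (rule power_mono[OF that(2) that(1)])
    then have "16 * \<rho>\<^sup>2 * y\<^sup>2 \<le> 16 * \<rho>\<^sup>2 * (4 * \<delta>)\<^sup>2" by (intro mult_left_mono) auto
    also have "\<dots> = 256 * \<rho>\<^sup>2 * \<delta>\<^sup>2" by (simp add: power2_eq_square)
    finally have "16 * \<rho>\<^sup>2 * y\<^sup>2 \<le> 256 * \<rho>\<^sup>2 * \<delta>\<^sup>2" .
    then show ?thesis using \<delta>(2) by linarith
  qed
  have sm0: "16 * \<rho>\<^sup>2 * (norm (x' - x))\<^sup>2 \<le> 1" using nxx \<delta>0 by (intro sqsmall) auto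
  note sp = seg_path[OF x(1) xR(1) x'(1) xR(2) sm0]
  have KC: "K \<subseteq> C" by (auto simp: K_def)
  have Mx: "segM x x' \<ge> 0" using segM_le(2)[OF sm0] by (meson norm_ge_zero order_trans)
  have dle: "intrinsic_dist C x x' \<le> ennreal (segM x x')"
    by (rule intrinsic_le[OF sp(4) Mx]) (use sp KC in auto)
  define Lr where "Lr = enn2real (intrinsic_dist C x x')"
  have dlt: "intrinsic_dist C x x' < top" using dle by (simp add: le_less_trans)
  have dLr: "intrinsic_dist C x x' = ennreal Lr" using dlt by (simp add: Lr_def)
  have Lr0: "Lr \<ge> 0" by (simp add: Lr_def)
  have LrM: "Lr \<le> segM x x'" using dle Mx by (simp add: dLr)
  have Lr2: "Lr \<le> 2 * norm (x' - x)" using LrM segM_le(1)[OF sm0] by simp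
  have Lr4: "Lr < 4 * \<delta>" using Lr2 nxx by simp
  have img: "\<gamma> t \<in> C" if "t \<in> {0..1}" for t using avg that unfolding averaging_map_def by auto
  have g0: "\<gamma> 0 = x" and g1: "\<gamma> 1 = x'" using avg unfolding averaging_map_def by auto
  have dst: "intrinsic_dist C (\<gamma> s) (\<gamma> t) = ennreal (\<bar>s - t\<bar> * Lr)" if "s \<in> {0..1}" "t \<in> {0..1}" for s t
    using avg that Lr0 unfolding averaging_map_def dLr by (simp add: ennreal_mult[symmetric])
  have lip: "norm (\<gamma> t - \<gamma> s) \<le> Lr * \<bar>t - s\<bar>" if "s \<in> {0..1}" "t \<in> {0..1}" for s t
  proof -
    have "ennreal (norm (\<gamma> t - \<gamma> s)) \<le> ennreal (\<bar>s - t\<bar> * Lr)"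
      using intrinsic_ge[of "\<gamma> t" "\<gamma> s" C] dst[OF that] by simp
    then show ?thesis using Lr0 by (simp add: abs_minus_commute mult.commute)
  qed
  have gball: "norm (\<gamma> t - xb) < R/2" if "t \<in> {0..1}" for t
  proof -
    have "norm (\<gamma> t - x) \<le> Lr * \<bar>t - 0\<bar>" using lip[of 0 t] that g0 by simp
    also have "\<dots> \<le> Lr" using that Lr0 by (simp add: mult_right_le_one_le)
    finally have "norm (\<gamma> t - x) < 4 * \<delta>" using Lr4 by simp
    then have "norm (\<gamma> t - xb) < 5 * \<delta>" using tri[of "\<gamma> t" xb x] x by simp
    then show ?thesis using \<delta> by simp
  qed
  have rev: "Lr * \<bar>t - s\<bar> \<le> norm (\<gamma> t - \<gamma> s) + (3 * \<rho>)\<^sup>2 * Lr^3 * \<bar>t - s\<bar>^3"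
    if s: "s \<in> {0..1}" and t: "t \<in> {0..1}" for s t
  proof -
    define n where "n = norm (\<gamma> t - \<gamma> s)"
    have nX: "n \<le> Lr * \<bar>t - s\<bar>" using lip[OF s t] by (simp add: n_def)
    have X1: "Lr * \<bar>t - s\<bar> \<le> Lr" using s t Lr0 by (intro mult_right_le_one_le) auto
    have sm: "16 * \<rho>\<^sup>2 * n\<^sup>2 \<le> 1" using nX X1 Lr4 by (intro sqsmall) (auto simp: n_def)
    note sp2 = seg_path[OF img[OF s] gball[OF s] img[OF t] gball[OF t] sm[unfolded n_def]]
    have M2: "segM (\<gamma> s) (\<gamma> t) \<ge> 0" using segM_le(2)[OF sm[unfolded n_def]] by (meson norm_ge_zero order_trans)
    have "intrinsic_dist C (\<gamma> s) (\<gamma> t) \<le> ennreal (segM (\<gamma> s) (\<gamma> t))"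
      by (rule intrinsic_le[OF sp2(4) M2]) (use sp2 KC in auto)
    then have "\<bar>s - t\<bar> * Lr \<le> segM (\<gamma> s) (\<gamma> t)" using dst[OF s t] M2 by simp
    then have "Lr * \<bar>t - s\<bar> \<le> n / (1 - 8 * \<rho>\<^sup>2 * n\<^sup>2)"
      by (simp add: segM_def n_def abs_minus_commute mult.commute)
    then have "Lr * \<bar>t - s\<bar> \<le> n + (3 * \<rho>)\<^sup>2 * (Lr * \<bar>t - s\<bar>)^3"
      using rev_arith[of n "Lr * \<bar>t - s\<bar>" \<rho>] nX sm Lr0 by (simp add: n_def)
    then show ?thesis by (simp add: n_def power_mult_distrib mult.assoc)
  qed
  have "regpath \<gamma> Lr (3 * \<rho>)"
    by (unfold_locales) (use Lr0 rhopos lip rev in auto)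
  then show ?thesis using Lr0 Lr2 by blast
qed

end

lemma lip_join:
  fixes f :: "real \<Rightarrow> 'a::real_normed_vector"
  assumes "a \<le> m" "m \<le> c"
    and L1: "\<And>x y. x \<in> {a..m} \<Longrightarrow> y \<in> {a..m} \<Longrightarrow> norm (f y - f x) \<le> K * \<bar>y - x\<bar>"
    and L2: "\<And>x y. x \<in> {m..c} \<Longrightarrow> y \<in> {m..c} \<Longrightarrow> norm (f y - f x) \<le> K * \<bar>y - x\<bar>"
    and x: "x \<in> {a..c}" and y: "y \<in> {a..c}"
  shows "norm (f y - f x) \<le> K * \<bar>y - x\<bar>"
proof -
  have gen: "norm (f q - f p) \<le> K * \<bar>q - p\<bar>" if pq: "p \<le> q" "p \<in> {a..c}" "q \<in> {a..c}" for p q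
  proof (cases "q \<le> m")
    case True then show ?thesis using L1[of p q] pq by auto
  next
    case False
    show ?thesis
    proof (cases "m \<le> p")
      case True then show ?thesis using L2[of p q] pq by auto
    next
      case False
      then have pm: "p \<in> {a..m}" "m \<in> {a..m}" "m \<in> {m..c}" "q \<in> {m..c}" using pq \<open>\<not> q \<le> m\<close> assms(1,2) by auto
      have "norm (f q - f p) \<le> norm (f q - f m) + norm (f m - f p)" by (rule tri)
      also have "\<dots> \<le> K * \<bar>q - m\<bar> + K * \<bar>m - p\<bar>" using L1[OF pm(1,2)] L2[OF pm(3,4)] by (rule add_mono[rotated])
      also have "\<dots> = K * \<bar>q - p\<bar>" using pm by (simp add: algebra_simps)
      finally show ?thesis .
    qed
  qed
  show ?thesis
  proof (cases "x \<le> y")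
    case True then show ?thesis using gen x y by auto
  next
    case False
    then have "norm (f x - f y) \<le> K * \<bar>x - y\<bar>" using gen x y by auto
    then show ?thesis by (simp add: norm_minus_commute abs_minus_commute)
  qed
qed

lemma piece3:
  fixes f1 f2 f3 :: "real \<Rightarrow> 'a::real_normed_vector"
  assumes t: "0 \<le> \<tau>1" "\<tau>1 \<le> \<tau>2" "\<tau>2 \<le> 1"
    and L1': "\<forall>x\<in>{0..\<tau>1}. \<forall>y\<in>{0..\<tau>1}. norm (f1 y - f1 x) \<le> K * \<bar>y - x\<bar>"
    and L2': "\<forall>x\<in>{\<tau>1..\<tau>2}. \<forall>y\<in>{\<tau>1..\<tau>2}. norm (f2 y - f2 x) \<le> K * \<bar>y - x\<bar>"
    and L3': "\<forall>x\<in>{\<tau>2..1}. \<forall>y\<in>{\<tau>2..1}. norm (f3 y - f3 x) \<le> K * \<bar>y - x\<bar>"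
    and c1: "f1 \<tau>1 = f2 \<tau>1" and c2: "f2 \<tau>2 = f3 \<tau>2"
    and h: "h = (\<lambda>\<tau>. if \<tau> \<le> \<tau>1 then f1 \<tau> else if \<tau> \<le> \<tau>2 then f2 \<tau> else f3 \<tau>)"
  shows "\<And>\<tau>. \<tau> \<in> {0..\<tau>1} \<Longrightarrow> h \<tau> = f1 \<tau>"
    "\<And>\<tau>. \<tau> \<in> {\<tau>1..\<tau>2} \<Longrightarrow> h \<tau> = f2 \<tau>"
    "\<And>\<tau>. \<tau> \<in> {\<tau>2..1} \<Longrightarrow> h \<tau> = f3 \<tau>"
    "\<And>x y. x \<in> {0..1} \<Longrightarrow> y \<in> {0..1} \<Longrightarrow> norm (h y - h x) \<le> K * \<bar>y - x\<bar>"
proof -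
  have L1: "norm (f1 y - f1 x) \<le> K * \<bar>y - x\<bar>" if "x \<in> {0..\<tau>1}" "y \<in> {0..\<tau>1}" for x y using L1' that by blast
  have L2: "norm (f2 y - f2 x) \<le> K * \<bar>y - x\<bar>" if "x \<in> {\<tau>1..\<tau>2}" "y \<in> {\<tau>1..\<tau>2}" for x y using L2' that by blast
  have L3: "norm (f3 y - f3 x) \<le> K * \<bar>y - x\<bar>" if "x \<in> {\<tau>2..1}" "y \<in> {\<tau>2..1}" for x y using L3' that by blast
  show e1: "h \<tau> = f1 \<tau>" if "\<tau> \<in> {0..\<tau>1}" for \<tau> using that by (simp add: h)
  show e2: "h \<tau> = f2 \<tau>" if "\<tau> \<in> {\<tau>1..\<tau>2}" for \<tau> using that c1 by (auto simp: h)
  show e3: "h \<tau> = f3 \<tau>" if "\<tau> \<in> {\<tau>2..1}" for \<tau> using that c1 c2 t by (auto simp: h)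
  have A: "norm (h y - h x) \<le> K * \<bar>y - x\<bar>" if "x \<in> {0..\<tau>2}" "y \<in> {0..\<tau>2}" for x y
  proof (rule lip_join[OF t(1,2) _ _ that])
    show "norm (h b - h a) \<le> K * \<bar>b - a\<bar>" if "a \<in> {0..\<tau>1}" "b \<in> {0..\<tau>1}" for a b
      using L1[OF that] e1[OF that(1)] e1[OF that(2)] by simp
    show "norm (h b - h a) \<le> K * \<bar>b - a\<bar>" if "a \<in> {\<tau>1..\<tau>2}" "b \<in> {\<tau>1..\<tau>2}" for a b
      using L2[OF that] e2[OF that(1)] e2[OF that(2)] by simp
  qed
  show "norm (h y - h x) \<le> K * \<bar>y - x\<bar>" if "x \<in> {0..1}" "y \<in> {0..1}" for x y
  proof (rule lip_join[OF _ t(3) _ _ that])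
    show "0 \<le> \<tau>2" using t by simp
    show "norm (h b - h a) \<le> K * \<bar>b - a\<bar>" if "a \<in> {0..\<tau>2}" "b \<in> {0..\<tau>2}" for a b
      using A[OF that] .
    show "norm (h b - h a) \<le> K * \<bar>b - a\<bar>" if "a \<in> {\<tau>2..1}" "b \<in> {\<tau>2..1}" for a b
      using L3[OF that] e3[OF that(1)] e3[OF that(2)] by simp
  qed
qed

context prox begin

definition "Fam x x' M = {h :: real \<Rightarrow> 'a. (\<forall>\<tau>. h \<tau> \<in> (if \<tau> \<in> {0..1} then K else {xb})) \<and> h 0 = x \<and> h 1 = x' \<and>
   (\<forall>s\<in>{0..1}. \<forall>t\<in>{0..1}. norm (h t - h s) \<le> M * \<bar>t - s\<bar>)}"

lemma K_compact: "compact K"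
proof -
  have "bounded K" by (auto simp: K_def intro: bounded_subset[OF bounded_cball])
  then show ?thesis using Kclosed by (simp add: compact_eq_bounded_closed K_def)
qed

lemma Fam_compact: "compact (Fam x x' M)"
proof -
  define S where "S \<tau> = (if \<tau> \<in> {0..1} then K else {xb})" for \<tau> :: real
  have cS: "compact (S \<tau>)" for \<tau> using K_compact by (simp add: S_def)
  have "compactin (product_topology (\<lambda>_. euclidean) UNIV) (PiE UNIV S)"
    by (simp add: compactin_PiE cS)
  then have cP: "compact (PiE UNIV S)" by (metis euclidean_product_topology compactin_euclidean_iff)
  have ev: "continuous_on UNIV (\<lambda>h::real \<Rightarrow> 'a. h \<tau>)" for \<tau> by (rule continuous_on_product_coordinates)
  define E where "E = {h::real \<Rightarrow> 'a. h 0 = x} \<inter> {h. h 1 = x'} \<inter>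
     (\<Inter>s\<in>{0..1}. \<Inter>t\<in>{0..1}. {h. norm (h t - h s) \<le> M * \<bar>t - s\<bar>})"
  have cE: "closed E" unfolding E_def
    by (intro closed_Int closed_INT ballI closed_Collect_eq[OF ev continuous_on_const]
        closed_Collect_le[OF continuous_on_norm[OF continuous_on_diff[OF ev ev]] continuous_on_const])
  have "Fam x x' M = PiE UNIV S \<inter> E"
    unfolding Fam_def E_def PiE_UNIV_domain Pi_def S_def by blast
  then show ?thesis using cP cE by (simp add: compact_Int_closed)
qed

lemma Fam_closed: "closed (Fam x x' M)"
proof -
  define S where "S \<tau> = (if \<tau> \<in> {0..1} then K else {xb})" for \<tau> :: real
  have cS: "closed (S \<tau>)" for \<tau> using K_compact by (simp add: S_def compact_imp_closed)
  have ev: "continuous_on UNIV (\<lambda>h::real \<Rightarrow> 'a. h \<tau>)" for \<tau> by (rule continuous_on_product_coordinates)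
  define E where "E = {h::real \<Rightarrow> 'a. h 0 = x} \<inter> {h. h 1 = x'} \<inter>
     (\<Inter>s\<in>{0..1}. \<Inter>t\<in>{0..1}. {h. norm (h t - h s) \<le> M * \<bar>t - s\<bar>})"
  have cE: "closed E" unfolding E_def
    by (intro closed_Int closed_INT ballI closed_Collect_eq[OF ev continuous_on_const]
        closed_Collect_le[OF continuous_on_norm[OF continuous_on_diff[OF ev ev]] continuous_on_const])
  have cV: "closed (\<Inter>\<tau>. (\<lambda>h::real \<Rightarrow> 'a. h \<tau>) -` S \<tau>)"
    by (intro closed_INT ballI closed_vimage[OF cS ev])
  have "Fam x x' M = (\<Inter>\<tau>. (\<lambda>h::real \<Rightarrow> 'a. h \<tau>) -` S \<tau>) \<inter> E"
    unfolding Fam_def E_def S_def by blast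
  then show ?thesis using cV cE by (simp add: closed_Int)
qed

lemma Fam_mono:
  assumes "M \<le> M'" shows "Fam x x' M \<subseteq> Fam x x' M'"
proof
  fix h assume h: "h \<in> Fam x x' M"
  have "norm (h t - h s) \<le> M' * \<bar>t - s\<bar>" if "s \<in> {0..1}" "t \<in> {0..1}" for s t
  proof -
    have "norm (h t - h s) \<le> M * \<bar>t - s\<bar>" using h that unfolding Fam_def by blast
    also have "\<dots> \<le> M' * \<bar>t - s\<bar>" using assms by (intro mult_right_mono) auto
    finally show ?thesis .
  qed
  then show "h \<in> Fam x x' M'" using h unfolding Fam_def by blast
qed

lemma Fam_nonneg:
  assumes "h \<in> Fam x x' M" shows "0 \<le> M"
proof -
  have H: "\<And>s t. s \<in> {0..1} \<Longrightarrow> t \<in> {0..1} \<Longrightarrow> norm (h t - h s) \<le> M * \<bar>t - s\<bar>"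
    using assms unfolding Fam_def by blast
  have "norm (h 1 - h 0) \<le> M * \<bar>1 - 0\<bar>" by (rule H) auto
  then have "norm (h 1 - h 0) \<le> M" by simp
  then show ?thesis by (meson norm_ge_zero order_trans)
qed

lemma exists_min:
  assumes ne: "Fam x x' M0 \<noteq> {}"
  shows "\<exists>g0 \<Lambda>0. g0 \<in> Fam x x' \<Lambda>0 \<and> (\<forall>M h. h \<in> Fam x x' M \<longrightarrow> \<Lambda>0 \<le> M) \<and> \<Lambda>0 \<le> M0"
proof -
  define Ms where "Ms = {M. Fam x x' M \<noteq> {}}"
  define \<Lambda>0 where "\<Lambda>0 = Inf Ms"
  have bdd: "bdd_below Ms" unfolding Ms_def bdd_below_def using Fam_nonneg by blast
  have M0: "M0 \<in> Ms" using ne by (simp add: Ms_def)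
  have low: "\<Lambda>0 \<le> M" if "h \<in> Fam x x' M" for M h
    unfolding \<Lambda>0_def using that bdd by (intro cInf_lower) (auto simp: Ms_def)
  define F where "F n = Fam x x' (\<Lambda>0 + inverse (real (Suc n)))" for n
  have Fne: "F n \<noteq> {}" for n
  proof -
    have "Inf Ms < \<Lambda>0 + inverse (real (Suc n))" by (simp add: \<Lambda>0_def)
    then obtain M where "M \<in> Ms" "M < \<Lambda>0 + inverse (real (Suc n))" using cInf_lessD[of Ms] M0 by blast
    then show ?thesis using Fam_mono[of M "\<Lambda>0 + inverse (real (Suc n))" x x'] by (auto simp: F_def Ms_def)
  qed
  have Fmono: "m \<le> n \<Longrightarrow> F n \<subseteq> F m" for m n
    unfolding F_def by (rule Fam_mono) (simp add: field_simps)
  have "F 0 \<inter> \<Inter>(range F) \<noteq> {}"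
  proof (rule compact_imp_fip)
    show "compact (F 0)" by (simp add: F_def Fam_compact)
    show "closed T" if "T \<in> range F" for T using that by (auto simp: F_def intro!: Fam_closed)
    fix F' assume fin: "finite F'" and sub: "F' \<subseteq> range F"
    obtain N' where N': "finite N'" "F' = F ` N'" using finite_subset_image[OF fin sub] by auto
    define N where "N = Max (insert 0 N')"
    have "F N \<subseteq> F 0 \<inter> \<Inter>F'"
    proof -
      have "F N \<subseteq> F n" if "n \<in> insert 0 N'" for n
        using that N'(1) by (intro Fmono) (auto simp: N_def)
      then show ?thesis using N'(2) by auto
    qed
    then show "F 0 \<inter> \<Inter>F' \<noteq> {}" using Fne[of N] by blast
  qed
  then obtain g0 where g0: "\<And>n. g0 \<in> F n" by auto
  have "g0 \<in> Fam x x' \<Lambda>0"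
  proof -
    have g00: "g0 \<in> Fam x x' (\<Lambda>0 + inverse (real (Suc 0)))" using g0[of 0] by (simp add: F_def)
    have lip: "norm (g0 t - g0 s) \<le> \<Lambda>0 * \<bar>t - s\<bar>" if st: "s \<in> {0..1}" "t \<in> {0..1}" for s t
    proof (rule field_le_epsilon)
      fix e :: real assume e: "e > 0"
      obtain m where m: "m > 0" "inverse (real m) < e" using ex_inverse_of_nat_less[OF e] by auto
      then obtain n where n: "m = Suc n" by (cases m) auto
      have "norm (g0 t - g0 s) \<le> (\<Lambda>0 + inverse (real (Suc n))) * \<bar>t - s\<bar>"
        using g0[of n] st by (auto simp: F_def Fam_def)
      also have "\<dots> = \<Lambda>0 * \<bar>t - s\<bar> + inverse (real (Suc n)) * \<bar>t - s\<bar>" by (simp add: algebra_simps)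
      also have "inverse (real (Suc n)) * \<bar>t - s\<bar> \<le> inverse (real (Suc n)) * 1"
        using st by (intro mult_left_mono) auto
      also have "\<dots> \<le> e" using m n by simp
      finally show "norm (g0 t - g0 s) \<le> \<Lambda>0 * \<bar>t - s\<bar> + e" by simp
    qed
    show ?thesis using g00 lip unfolding Fam_def by auto
  qed
  moreover have "\<Lambda>0 \<le> M0" unfolding \<Lambda>0_def by (rule cInf_lower[OF M0 bdd])
  ultimately show ?thesis using low by blast
qed

end

context prox begin

lemma min_rev:
  assumes g0: "g0 \<in> Fam x x' \<Lambda>0" and low: "\<forall>M h. h \<in> Fam x x' M \<longrightarrow> \<Lambda>0 \<le> M"
    and st: "0 \<le> s" "s < t" "t \<le> 1"
    and ab: "g0 s \<in> C" "norm (g0 s - xb) < R/2" "g0 t \<in> C" "norm (g0 t - xb) < R/2"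
    and sm: "16 * \<rho>\<^sup>2 * (norm (g0 t - g0 s))\<^sup>2 \<le> 1"
  shows "\<Lambda>0 * (t - s) \<le> segM (g0 s) (g0 t)"
proof -
  define a b where "a = g0 s" and "b = g0 t"
  define q where "q = segq a b"
  define Mq where "Mq = segM a b"
  note sp = seg_path[OF ab(1,2,3,4) sm, folded a_def b_def, folded q_def Mq_def]
  have Mq0: "Mq \<ge> 0" using segM_le(2)[OF sm] by (simp add: Mq_def a_def b_def) (meson norm_ge_zero order_trans)
  have gK0: "\<forall>\<tau>. g0 \<tau> \<in> (if \<tau> \<in> {0..1} then K else {xb})" using g0 unfolding Fam_def by blast
  have gK: "g0 \<tau> \<in> K" if "\<tau> \<in> {0..1}" for \<tau> using gK0 that by (metis (full_types))
  have gL: "norm (g0 v - g0 w) \<le> \<Lambda>0 * \<bar>v - w\<bar>" if "w \<in> {0..1}" "v \<in> {0..1}" for v w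
    using g0 that unfolding Fam_def by blast
  have g01: "g0 0 = x" "g0 1 = x'" using g0 unfolding Fam_def by auto
  have L0: "\<Lambda>0 \<ge> 0" using Fam_nonneg[OF g0] .
  show ?thesis
  proof (cases "\<Lambda>0 = 0")
    case True then show ?thesis using Mq0 by (simp add: Mq_def a_def b_def)
  next
    case False
    then have Lp: "\<Lambda>0 > 0" using L0 by simp
    show ?thesis
    proof (cases "s = 0 \<and> t = 1")
      case True
      define h where "h \<tau> = (if \<tau> \<in> {0..1} then q \<tau> else xb)" for \<tau>
      have "h \<in> Fam x x' Mq"
        unfolding Fam_def using sp True g01 by (auto simp: h_def a_def b_def)
      then have "\<Lambda>0 \<le> Mq" using low by blast
      then show ?thesis using True by (simp add: Mq_def a_def b_def)
    next
      case False
      define T where "T = \<Lambda>0 * s + Mq + \<Lambda>0 * (1 - t)"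
      have "\<Lambda>0 * s + \<Lambda>0 * (1 - t) > 0"
      proof (cases "s = 0")
        case True then have "t < 1" using False st by auto
        then show ?thesis using True Lp by simp
      next
        case False then show ?thesis using st Lp by (simp add: add_pos_nonneg)
      qed
      then have Tp: "T > 0" using Mq0 by (simp add: T_def)
      define \<tau>1 \<tau>2 where "\<tau>1 = \<Lambda>0 * s / T" and "\<tau>2 = (\<Lambda>0 * s + Mq) / T"
      have k1: "\<tau>1 * T = \<Lambda>0 * s" using Tp by (simp add: \<tau>1_def)
      have k2: "(\<tau>2 - \<tau>1) * T = Mq" using Tp by (simp add: \<tau>1_def \<tau>2_def diff_divide_distrib[symmetric])
      have k3: "(1 - \<tau>2) * T = \<Lambda>0 * (1 - t)" using Tp by (simp add: \<tau>2_def T_def field_simps)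
      have t12: "0 \<le> \<tau>1" "\<tau>1 \<le> \<tau>2" "\<tau>2 \<le> 1"
      proof -
        show "0 \<le> \<tau>1" using Tp L0 st by (simp add: \<tau>1_def)
        show "\<tau>1 \<le> \<tau>2" using Tp Mq0 by (simp add: \<tau>1_def \<tau>2_def divide_right_mono)
        have "0 \<le> (1 - \<tau>2) * T" using k3 L0 st by simp
        then show "\<tau>2 \<le> 1" using Tp by (simp add: zero_le_mult_iff)
      qed
      define f1 where "f1 \<tau> = g0 (\<tau> * T / \<Lambda>0)" for \<tau>
      define f2 where "f2 \<tau> = q ((\<tau> - \<tau>1) * T / Mq)" for \<tau>
      define f3 where "f3 \<tau> = g0 (t + (\<tau> - \<tau>2) * T / \<Lambda>0)" for \<tau>
      define h where "h = (\<lambda>\<tau>. if \<tau> \<le> \<tau>1 then f1 \<tau> else if \<tau> \<le> \<tau>2 then f2 \<tau> else f3 \<tau>)"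
      have a1: "\<tau> * T / \<Lambda>0 \<in> {0..s}" if "\<tau> \<in> {0..\<tau>1}" for \<tau>
      proof -
        have "\<tau> * T \<le> \<tau>1 * T" using that Tp by (intro mult_right_mono) auto
        then have "\<tau> * T \<le> \<Lambda>0 * s" using k1 by simp
        then show ?thesis using that Tp Lp by (auto simp: divide_le_eq mult.commute)
      qed
      have a2: "(\<tau> - \<tau>1) * T / Mq \<in> {0..1}" if "\<tau> \<in> {\<tau>1..\<tau>2}" for \<tau>
      proof (cases "Mq = 0")
        case True then show ?thesis by simp
      next
        case False
        have "(\<tau> - \<tau>1) * T \<le> (\<tau>2 - \<tau>1) * T" using that Tp by (intro mult_right_mono) auto
        then have "(\<tau> - \<tau>1) * T \<le> Mq" using k2 by simp
        then show ?thesis using that Tp Mq0 False by (auto simp: divide_le_eq)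
      qed
      have a3: "t + (\<tau> - \<tau>2) * T / \<Lambda>0 \<in> {t..1}" if "\<tau> \<in> {\<tau>2..1}" for \<tau>
      proof -
        have "(\<tau> - \<tau>2) * T \<le> (1 - \<tau>2) * T" using that Tp by (intro mult_right_mono) auto
        then have "(\<tau> - \<tau>2) * T \<le> \<Lambda>0 * (1 - t)" using k3 by simp
        then have "(\<tau> - \<tau>2) * T / \<Lambda>0 \<le> 1 - t" using Lp by (simp add: divide_le_eq mult.commute)
        moreover have "0 \<le> (\<tau> - \<tau>2) * T / \<Lambda>0" using that Tp Lp by simp
        ultimately show ?thesis by simp
      qed
      have L1: "norm (f1 y - f1 w) \<le> T * \<bar>y - w\<bar>" if "w \<in> {0..\<tau>1}" "y \<in> {0..\<tau>1}" for w y
      proof -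
        have "norm (f1 y - f1 w) \<le> \<Lambda>0 * \<bar>y * T / \<Lambda>0 - w * T / \<Lambda>0\<bar>"
          unfolding f1_def by (rule gL) (use a1[OF that(1)] a1[OF that(2)] st in auto)
        also have "\<dots> = T * \<bar>y - w\<bar>" using Lp Tp
          by (simp add: diff_divide_distrib[symmetric] left_diff_distrib[symmetric] abs_mult)
        finally show ?thesis .
      qed
      have L2: "norm (f2 y - f2 w) \<le> T * \<bar>y - w\<bar>" if "w \<in> {\<tau>1..\<tau>2}" "y \<in> {\<tau>1..\<tau>2}" for w y
      proof (cases "Mq = 0")
        case True then show ?thesis using Tp by (simp add: f2_def)
      next
        case False
        have "norm (f2 y - f2 w) \<le> Mq * \<bar>(y - \<tau>1) * T / Mq - (w - \<tau>1) * T / Mq\<bar>"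
          unfolding f2_def by (rule sp(4)) (use a2[OF that(1)] a2[OF that(2)] in auto)
        also have "\<dots> = T * \<bar>y - w\<bar>" using Mq0 False Tp
          by (simp add: diff_divide_distrib[symmetric] left_diff_distrib[symmetric] abs_mult)
        finally show ?thesis .
      qed
      have L3: "norm (f3 y - f3 w) \<le> T * \<bar>y - w\<bar>" if "w \<in> {\<tau>2..1}" "y \<in> {\<tau>2..1}" for w y
      proof -
        have "norm (f3 y - f3 w) \<le> \<Lambda>0 * \<bar>(t + (y - \<tau>2) * T / \<Lambda>0) - (t + (w - \<tau>2) * T / \<Lambda>0)\<bar>"
          unfolding f3_def by (rule gL) (use a3[OF that(1)] a3[OF that(2)] st in auto)
        also have "\<dots> = T * \<bar>y - w\<bar>" using Lp Tp
          by (simp add: diff_divide_distrib[symmetric] left_diff_distrib[symmetric] abs_mult)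
        finally show ?thesis .
      qed
      have c1: "f1 \<tau>1 = f2 \<tau>1"
      proof -
        have "\<tau>1 * T / \<Lambda>0 = s" using k1 Lp by simp
        then show ?thesis using sp(1) by (simp add: f1_def f2_def a_def)
      qed
      have c2: "f2 \<tau>2 = f3 \<tau>2"
      proof (cases "Mq = 0")
        case True
        have "norm (b - a) \<le> 0" using segM_le(2)[OF sm] True by (simp add: Mq_def a_def b_def)
        then have "b = a" by simp
        then show ?thesis using sp(1) True by (simp add: f2_def f3_def b_def)
      next
        case False
        have e: "(\<tau>2 - \<tau>1) * T / Mq = 1" using k2 False by simp
        have "f2 \<tau>2 = q 1" by (simp only: f2_def e)
        moreover have "f3 \<tau>2 = g0 t" by (simp add: f3_def)
        ultimately show ?thesis using sp(2) by (simp add: b_def)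
      qed
      have L1': "\<forall>w\<in>{0..\<tau>1}. \<forall>y\<in>{0..\<tau>1}. norm (f1 y - f1 w) \<le> T * \<bar>y - w\<bar>" using L1 by blast
      have L2': "\<forall>w\<in>{\<tau>1..\<tau>2}. \<forall>y\<in>{\<tau>1..\<tau>2}. norm (f2 y - f2 w) \<le> T * \<bar>y - w\<bar>" using L2 by blast
      have L3': "\<forall>w\<in>{\<tau>2..1}. \<forall>y\<in>{\<tau>2..1}. norm (f3 y - f3 w) \<le> T * \<bar>y - w\<bar>" using L3 by blast
      note pc = piece3[OF t12 L1' L2' L3' c1 c2 h_def]
      define h' where "h' \<tau> = (if \<tau> \<in> {0..1} then h \<tau> else xb)" for \<tau>
      have hK: "h \<tau> \<in> K" if tin: "\<tau> \<in> {0..1}" for \<tau>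
      proof -
        have "\<tau> \<le> \<tau>1 \<or> (\<tau>1 \<le> \<tau> \<and> \<tau> \<le> \<tau>2) \<or> \<tau>2 \<le> \<tau>" by linarith
        then consider "\<tau> \<in> {0..\<tau>1}" | "\<tau> \<in> {\<tau>1..\<tau>2}" | "\<tau> \<in> {\<tau>2..1}" using tin by auto
        then show ?thesis
        proof cases
          case 1 then show ?thesis using pc(1)[OF 1] a1[OF 1] st gK by (auto simp: f1_def)
        next
          case 2 then show ?thesis using pc(2)[OF 2] sp(3) by (simp add: f2_def)
        next
          case 3 then show ?thesis using pc(3)[OF 3] a3[OF 3] st gK by (auto simp: f3_def)
        qed
      qed
      have h0: "h 0 = x" using pc(1)[of 0] t12 g01 by (simp add: f1_def)
      have h1: "h 1 = x'"
      proof -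
        have "(1 - \<tau>2) * T / \<Lambda>0 = 1 - t" using k3 Lp by simp
        then show ?thesis using pc(3)[of 1] t12 g01 by (simp add: f3_def)
      qed
      have "h' \<in> Fam x x' T"
        unfolding Fam_def using hK h0 h1 pc(4) by (auto simp: h'_def)
      then have "\<Lambda>0 \<le> T" using low by blast
      then show ?thesis by (simp add: T_def Mq_def a_def b_def algebra_simps)
    qed
  qed
qed

end

lemma final_bound:
  fixes \<Lambda> n \<delta> \<rho> eps :: real
  assumes "0 \<le> \<Lambda>" "\<Lambda> \<le> 2 * n" "n \<le> 2 * \<delta>" "288 * \<rho> * \<delta> \<le> eps" "\<rho> > 0"
  shows "12 * (3 * \<rho>) * \<Lambda>\<^sup>2 \<le> eps * n"
proof -
  have n0: "n \<ge> 0" using assms by simp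
  have "\<Lambda>\<^sup>2 \<le> (2 * n)\<^sup>2" by (rule power_mono[OF assms(2) assms(1)])
  then have "12 * (3 * \<rho>) * \<Lambda>\<^sup>2 \<le> 12 * (3 * \<rho>) * (2 * n)\<^sup>2" using assms(5) by (intro mult_left_mono) auto
  also have "\<dots> = (144 * \<rho> * n) * n" by (simp add: power2_eq_square)
  also have "\<dots> \<le> (144 * \<rho> * (2 * \<delta>)) * n" using assms(3,5) n0 by (intro mult_right_mono mult_left_mono) auto
  also have "\<dots> \<le> eps * n" using assms(4) n0 by (intro mult_right_mono) auto
  finally show ?thesis .
qed

context prox begin

lemma part1_path:
  assumes x: "x \<in> C" "norm (x - xb) < \<delta>" and x': "x' \<in> C" "norm (x' - xb) < \<delta>"
    and \<delta>: "\<delta> \<le> R/10" "256 * \<rho>\<^sup>2 * \<delta>\<^sup>2 \<le> 1"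
  shows "\<exists>g0 \<Lambda>0. 0 \<le> \<Lambda>0 \<and> \<Lambda>0 \<le> 2 * norm (x' - x) \<and> regpath g0 \<Lambda>0 (3 * \<rho>) \<and>
           g0 ` {0..1} \<subseteq> C \<and> g0 0 = x \<and> g0 1 = x'"
proof -
  have \<delta>0: "\<delta> > 0" using x by (meson le_less_trans norm_ge_zero)
  have xR: "norm (x - xb) < R/2" "norm (x' - xb) < R/2" using x x' \<delta> Rpos by auto
  have nxx: "norm (x' - x) < 2 * \<delta>"
    using tri[of x' x xb] x x' by (simp add: norm_minus_commute)
  have sqsmall: "16 * \<rho>\<^sup>2 * y\<^sup>2 \<le> 1" if "0 \<le> y" "y \<le> 4 * \<delta>" for y
  proof -
    have "y\<^sup>2 \<le> (4 * \<delta>)\<^sup>2" by (rule power_mono[OF that(2) that(1)])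
    then have "16 * \<rho>\<^sup>2 * y\<^sup>2 \<le> 16 * \<rho>\<^sup>2 * (4 * \<delta>)\<^sup>2" by (intro mult_left_mono) auto
    also have "\<dots> = 256 * \<rho>\<^sup>2 * \<delta>\<^sup>2" by (simp add: power2_eq_square)
    finally have "16 * \<rho>\<^sup>2 * y\<^sup>2 \<le> 256 * \<rho>\<^sup>2 * \<delta>\<^sup>2" .
    then show ?thesis using \<delta>(2) by linarith
  qed
  have sm0: "16 * \<rho>\<^sup>2 * (norm (x' - x))\<^sup>2 \<le> 1" using nxx \<delta>0 by (intro sqsmall) auto
  note sp = seg_path[OF x(1) xR(1) x'(1) xR(2) sm0]
  define h where "h \<tau> = (if \<tau> \<in> {0..1} then segq x x' \<tau> else xb)" for \<tau>
  have "h \<in> Fam x x' (segM x x')" unfolding Fam_def using sp by (auto simp: h_def)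
  then have "Fam x x' (segM x x') \<noteq> {}" by blast
  from exists_min[OF this] obtain g0 \<Lambda>0 where g0: "g0 \<in> Fam x x' \<Lambda>0"
    and low: "\<forall>M h. h \<in> Fam x x' M \<longrightarrow> \<Lambda>0 \<le> M" and LM: "\<Lambda>0 \<le> segM x x'" by blast
  have L0: "\<Lambda>0 \<ge> 0" using Fam_nonneg[OF g0] .
  have L2: "\<Lambda>0 \<le> 2 * norm (x' - x)" using LM segM_le(1)[OF sm0] by simp
  have L4: "\<Lambda>0 < 4 * \<delta>" using L2 nxx by simp
  have gK0: "\<forall>\<tau>. g0 \<tau> \<in> (if \<tau> \<in> {0..1} then K else {xb})" using g0 unfolding Fam_def by blast
  have gK: "g0 \<tau> \<in> K" if "\<tau> \<in> {0..1}" for \<tau> using gK0 that by (metis (full_types))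
  have gC: "g0 \<tau> \<in> C" if "\<tau> \<in> {0..1}" for \<tau> using gK[OF that] by (simp add: K_def)
  have lip: "norm (g0 v - g0 w) \<le> \<Lambda>0 * \<bar>v - w\<bar>" if "w \<in> {0..1}" "v \<in> {0..1}" for v w
    using g0 that unfolding Fam_def by blast
  have g01: "g0 0 = x" "g0 1 = x'" using g0 unfolding Fam_def by auto
  have gball: "norm (g0 t - xb) < R/2" if "t \<in> {0..1}" for t
  proof -
    have "norm (g0 t - x) \<le> \<Lambda>0 * \<bar>t - 0\<bar>" using lip[of 0 t] that g01 by simp
    also have "\<dots> \<le> \<Lambda>0" using that L0 by (simp add: mult_right_le_one_le)
    finally have "norm (g0 t - x) < 4 * \<delta>" using L4 by simp
    then have "norm (g0 t - xb) < 5 * \<delta>" using tri[of "g0 t" xb x] x by simp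
    then show ?thesis using \<delta> by simp
  qed
  have revlt: "\<Lambda>0 * \<bar>t - s\<bar> \<le> norm (g0 t - g0 s) + (3 * \<rho>)\<^sup>2 * \<Lambda>0^3 * \<bar>t - s\<bar>^3"
    if s: "s \<in> {0..1}" and t: "t \<in> {0..1}" and lt: "s < t" for s t
  proof -
    define n where "n = norm (g0 t - g0 s)"
    have nX: "n \<le> \<Lambda>0 * \<bar>t - s\<bar>" using lip[OF s t] by (simp add: n_def)
    have X1: "\<Lambda>0 * \<bar>t - s\<bar> \<le> \<Lambda>0" using s t L0 by (intro mult_right_le_one_le) auto
    have sm: "16 * \<rho>\<^sup>2 * n\<^sup>2 \<le> 1" using nX X1 L4 by (intro sqsmall) (auto simp: n_def)
    have "\<Lambda>0 * (t - s) \<le> segM (g0 s) (g0 t)"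
      by (rule min_rev[OF g0 low]) (use s t lt gC gball sm in \<open>auto simp: n_def\<close>)
    then have "\<Lambda>0 * \<bar>t - s\<bar> \<le> n / (1 - 8 * \<rho>\<^sup>2 * n\<^sup>2)" using lt by (simp add: segM_def n_def)
    then have "\<Lambda>0 * \<bar>t - s\<bar> \<le> n + (3 * \<rho>)\<^sup>2 * (\<Lambda>0 * \<bar>t - s\<bar>)^3"
      using rev_arith[of n "\<Lambda>0 * \<bar>t - s\<bar>" \<rho>] nX sm L0 by (simp add: n_def)
    then show ?thesis by (simp add: n_def power_mult_distrib mult.assoc)
  qed
  have rev: "\<Lambda>0 * \<bar>t - s\<bar> \<le> norm (g0 t - g0 s) + (3 * \<rho>)\<^sup>2 * \<Lambda>0^3 * \<bar>t - s\<bar>^3"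
    if s: "s \<in> {0..1}" and t: "t \<in> {0..1}" for s t
  proof -
    consider "s < t" | "s = t" | "t < s" by linarith
    then show ?thesis
    proof cases
      case 1 then show ?thesis using revlt[OF s t] by simp
    next
      case 2 then show ?thesis by simp
    next
      case 3
      then have "\<Lambda>0 * \<bar>s - t\<bar> \<le> norm (g0 s - g0 t) + (3 * \<rho>)\<^sup>2 * \<Lambda>0^3 * \<bar>s - t\<bar>^3" using revlt[OF t s] by simp
      then show ?thesis by (simp add: norm_minus_commute abs_minus_commute)
    qed
  qed
  have "regpath g0 \<Lambda>0 (3 * \<rho>)"
    by (unfold_locales) (use L0 rhopos lip rev in auto)
  moreover have "g0 ` {0..1} \<subseteq> C" using gC by auto
  ultimately show ?thesis using L0 L2 g01 by blast
qed

end

lemma make_eps_path: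
  fixes g :: "real \<Rightarrow> 'a::euclidean_space"
  assumes rp: "regpath g \<Lambda> (3 * \<rho>)" and L: "0 \<le> \<Lambda>" "\<Lambda> \<le> 2 * norm (x' - x)"
    and n: "norm (x' - x) \<le> 2 * \<delta>" and d: "288 * \<rho> * \<delta> \<le> eps" and r: "\<rho> > 0"
    and img: "g ` {0..1} \<subseteq> C" and e: "g 0 = x" "g 1 = x'"
  shows "eps_path eps C x x' g"
proof -
  obtain G G' where G: "\<forall>t\<in>{0..1}. G t = g t" "\<forall>t. (G has_vector_derivative G' t) (at t)"
    "continuous_on UNIV G'" "\<forall>t\<in>{0..1}. norm (G' t - (g 1 - g 0)) \<le> 12 * (3 * \<rho>) * \<Lambda>\<^sup>2"
    using regpath.regularity[OF rp] by blast
  have b: "12 * (3 * \<rho>) * \<Lambda>\<^sup>2 \<le> eps * norm (x' - x)" by (rule final_bound[OF L n d r])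
  have X: "\<forall>t\<in>{0..1}. norm (G' t - (x' - x)) \<le> eps * norm (x' - x)" using G(4) b e by force
  have "open (UNIV::real set) \<and> {0..1} \<subseteq> (UNIV::real set) \<and> (\<forall>t\<in>{0..1}. G t = g t) \<and>
      (\<forall>t\<in>UNIV. (G has_vector_derivative G' t) (at t)) \<and> continuous_on UNIV G' \<and>
      (\<forall>t\<in>{0..1}. norm (G' t - (x' - x)) \<le> eps * norm (x' - x))"
    using G(1,2,3) X by simp
  then have "\<exists>U g1 g2. open U \<and> {0..1} \<subseteq> U \<and> (\<forall>t\<in>{0..1}. g1 t = g t) \<and>
      (\<forall>t\<in>U. (g1 has_vector_derivative g2 t) (at t)) \<and> continuous_on U g2 \<and>
      (\<forall>t\<in>{0..1}. norm (g2 t - (x' - x)) \<le> eps * norm (x' - x))" by blast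
  then show ?thesis unfolding eps_path_def using img e by blast
qed

theorem theorem3p19:
  fixes C :: "'a::euclidean_space set" and xb :: 'a
  assumes "xb \<in> C" and "prox_regular_at C xb"
  shows "smoothly_approx_convex_at C xb \<and>
         (\<forall>eps>0. \<exists>\<delta>>0. \<forall>x\<in>C \<inter> ball xb \<delta>. \<forall>x'\<in>C \<inter> ball xb \<delta>.
            \<forall>\<gamma>. averaging_map C x x' \<gamma> \<longrightarrow> eps_path eps C x x' \<gamma>)"
proof -
  obtain e \<rho> where e: "e > 0" "\<rho> > 0" "closed (C \<inter> cball xb e)"
    and hy: "\<And>x y v. x \<in> C \<inter> ball xb e \<Longrightarrow> y \<in> C \<inter> ball xb e \<Longrightarrow> v \<in> reg_normal_cone C x \<Longrightarrow>
        inner v (y - x) \<le> \<rho> * norm v * (norm (y - x))\<^sup>2"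
    using hypomonotone[OF assms] by blast
  interpret P: prox C xb e \<rho> by (unfold_locales) (use e hy assms(1) in auto)
  define D where "D eps = min (e/10) (min (1/(16*\<rho>)) (eps/(288*\<rho>)))" for eps :: real
  have Dp: "D eps > 0" "D eps \<le> e/10" "256 * \<rho>\<^sup>2 * (D eps)\<^sup>2 \<le> 1" "288 * \<rho> * D eps \<le> eps"
    if "eps > 0" for eps
  proof -
    show "D eps > 0" using e that by (simp add: D_def)
    show "D eps \<le> e/10" by (simp add: D_def)
    have "16 * \<rho> * D eps \<le> 16 * \<rho> * (1/(16*\<rho>))" using e by (intro mult_left_mono) (auto simp: D_def)
    then have a: "16 * \<rho> * D eps \<le> 1" using e by simp
    have "0 \<le> 16 * \<rho> * D eps" using e \<open>D eps > 0\<close> by simp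
    then have "(16 * \<rho> * D eps)\<^sup>2 \<le> 1\<^sup>2" by (rule power_mono[OF a])
    then show "256 * \<rho>\<^sup>2 * (D eps)\<^sup>2 \<le> 1" by (simp add: power_mult_distrib)
    have "288 * \<rho> * D eps \<le> 288 * \<rho> * (eps/(288*\<rho>))" using e by (intro mult_left_mono) (auto simp: D_def)
    then show "288 * \<rho> * D eps \<le> eps" using e by simp
  qed
  have nb: "norm (y - xb) < d" if "y \<in> ball xb d" for y d using that by (simp add: dist_norm norm_minus_commute)
  have nxx: "norm (x' - x) \<le> 2 * d" if "x \<in> ball xb d" "x' \<in> ball xb d" for x x' d
  proof -
    have "norm (x' - x) \<le> norm (x' - xb) + norm (x - xb)" by (rule tri2)
    then show ?thesis using nb[OF that(1)] nb[OF that(2)] by simp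
  qed
  have part1: "smoothly_approx_convex_at C xb"
    unfolding smoothly_approx_convex_at_def
  proof (intro allI impI)
    fix eps :: real assume eps: "eps > 0"
    note d = Dp[OF eps]
    show "\<exists>W. open W \<and> xb \<in> W \<and> (\<forall>x\<in>C \<inter> W. \<forall>x'\<in>C \<inter> W. \<exists>\<gamma>. eps_path eps C x x' \<gamma>)"
    proof (intro exI[of _ "ball xb (D eps)"] conjI ballI)
      show "open (ball xb (D eps))" by simp
      show "xb \<in> ball xb (D eps)" using d by simp
      fix x x' assume x: "x \<in> C \<inter> ball xb (D eps)" and x': "x' \<in> C \<inter> ball xb (D eps)"
      obtain g0 \<Lambda>0 where g: "0 \<le> \<Lambda>0" "\<Lambda>0 \<le> 2 * norm (x' - x)" "regpath g0 \<Lambda>0 (3 * \<rho>)"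
        "g0 ` {0..1} \<subseteq> C" "g0 0 = x" "g0 1 = x'"
        using P.part1_path[of x "D eps" x'] x x' nb d by blast
      have "eps_path eps C x x' g0"
        by (rule make_eps_path[OF g(3) g(1) g(2) _ d(4) e(2) g(4) g(5) g(6)]) (use nxx x x' in blast)
      then show "\<exists>\<gamma>. eps_path eps C x x' \<gamma>" by blast
    qed
  qed
  have part2: "\<forall>eps>0. \<exists>\<delta>>0. \<forall>x\<in>C \<inter> ball xb \<delta>. \<forall>x'\<in>C \<inter> ball xb \<delta>.
            \<forall>\<gamma>. averaging_map C x x' \<gamma> \<longrightarrow> eps_path eps C x x' \<gamma>"
  proof (intro allI impI)
    fix eps :: real assume eps: "eps > 0"
    note d = Dp[OF eps]
    show "\<exists>\<delta>>0. \<forall>x\<in>C \<inter> ball xb \<delta>. \<forall>x'\<in>C \<inter> ball xb \<delta>.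
            \<forall>\<gamma>. averaging_map C x x' \<gamma> \<longrightarrow> eps_path eps C x x' \<gamma>"
    proof (intro exI[of _ "D eps"] conjI ballI allI impI)
      show "D eps > 0" using d by simp
      fix x x' \<gamma> assume x: "x \<in> C \<inter> ball xb (D eps)" and x': "x' \<in> C \<inter> ball xb (D eps)"
        and avg: "averaging_map C x x' \<gamma>"
      obtain Lr where L: "0 \<le> Lr" "Lr \<le> 2 * norm (x' - x)" "regpath \<gamma> Lr (3 * \<rho>)"
        using P.avg_regular[of x "D eps" x' \<gamma>] x x' nb d avg by blast
      have img: "\<gamma> ` {0..1} \<subseteq> C" "\<gamma> 0 = x" "\<gamma> 1 = x'" using avg unfolding averaging_map_def by auto
      show "eps_path eps C x x' \<gamma>"
        by (rule make_eps_path[OF L(3) L(1) L(2) _ d(4) e(2) img]) (use nxx x x' in blast)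
    qed
  qed
  show ?thesis using part1 part2 by blast
qed

end
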